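(* Let $\Gamma$ be a finite multiset of formulas and $G$ a formula, and suppose $G\supset\bot,\Gamma\longrightarrow G$ has an $\mathbf{I}$-proof satisfying one of the following restrictions on rule usage: (1) no $\forall$-R rule is used; (2) no $\lor$-R rule is used or no $\lor$-L rule is used, and, in addition, either no $\exists$-R rule is used or no $\lor$-L and no $\exists$-L rules are used; (3) no $\forall$-L and no $\supset$-R rules are used. Then $G\supset\bot,\Gamma\longrightarrow G$ has a uniform proof. Furthermore, this characterization is complete: for each way of violating all three restrictions there is a sequent of the form $G\supset\bot,\Gamma\longrightarrow G$ with such a violating $\mathbf{I}$-proof but no uniform proof; concretely, for each $Y\in\{\forall\text{-L},\supset\text{-R}\}$ there is such a sequent whose $\mathbf{I}$-proof uses rules of each of the kinds $\forall$-R, $\lor$-R, $\lor$-L, $Y$, and for each $Y\in\{\forall\text{-L},\supset\text{-R}\}$ and $Z\in\{\lor\text{-L},\exists\text{-L}\}$ there is such a sequent whose $\mathbf{I}$-proof uses rules of each of the kinds $\forall$-R, $\exists$-R, $Z$, $Y$.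
   Context: Formulas are first-order formulas built from atomic formulas and the logical constants $\top$, $\bot$ (not counted as atomic) using $\land,\lor,\supset,\forall,\exists$; $\neg A$ abbreviates $A\supset\bot$; $B[t/x]$ is capture-avoiding substitution of term $t$ for free $x$ in $B$. A sequent $\Gamma\longrightarrow\Delta$ is a pair of finite multisets of formulas; $B,\Gamma$ denotes $\Gamma$ with an extra occurrence of $B$. A sequent is an axiom if $\top\in\Delta$ or some formula that is $\bot$ or atomic occurs in both $\Gamma$ and $\Delta$. Writing premises $\Rightarrow$ conclusion, the rules are all instances of: contr-L: $B,B,\Gamma\longrightarrow\Delta\Rightarrow B,\Gamma\longrightarrow\Delta$; contr-R: $\Gamma\longrightarrow\Delta,B,B\Rightarrow\Gamma\longrightarrow\Delta,B$; $\bot$-R: $\Gamma\longrightarrow\Delta,\bot\Rightarrow\Gamma\longrightarrow\Delta,D$; $\land$-L: $B,\Gamma\longrightarrow\Delta\Rightarrow B\land D,\Gamma\longrightarrow\Delta$ and $D,\Gamma\longrightarrow\Delta\Rightarrow B\land D,\Gamma\longrightarrow\Delta$; $\lor$-L: $B,\Gamma\longrightarrow\Delta$ and $D,\Gamma\longrightarrow\Delta\Rightarrow B\lor D,\Gamma\longrightarrow\Delta$; $\land$-R: $\Gamma\longrightarrow\Delta,B$ and $\Gamma\longrightarrow\Delta,D\Rightarrow\Gamma\longrightarrow\Delta,B\land D$; $\lor$-R: $\Gamma\longrightarrow\Delta,B\Rightarrow\Gamma\longrightarrow\Delta,B\lor D$ and $\Gamma\longrightarrow\Delta,D\Rightarrow\Gamma\longrightarrow\Delta,B\lor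 D$; $\supset$-L: $\Gamma\longrightarrow\Delta,B$ and $D,\Gamma\longrightarrow\Theta\Rightarrow B\supset D,\Gamma\longrightarrow\Delta,\Theta$; $\supset$-R: $B,\Gamma\longrightarrow\Delta,D\Rightarrow\Gamma\longrightarrow\Delta,B\supset D$; $\forall$-L: $B[t/x],\Gamma\longrightarrow\Delta\Rightarrow\forall x B,\Gamma\longrightarrow\Delta$; $\exists$-R: $\Gamma\longrightarrow\Delta,B[t/x]\Rightarrow\Gamma\longrightarrow\Delta,\exists x B$ ($t$ any term); $\exists$-L: $B[c/x],\Gamma\longrightarrow\Delta\Rightarrow\exists x B,\Gamma\longrightarrow\Delta$; $\forall$-R: $\Gamma\longrightarrow\Delta,B[c/x]\Rightarrow\Gamma\longrightarrow\Delta,\forall x B$, where the constant $c$ does not occur in the conclusion. A $\mathbf{C}$-proof is a finite tree of sequents with axioms at the leaves, each internal node being the conclusion of a rule instance whose premises are its children. An $\mathbf{I}$-proof is a $\mathbf{C}$-proof in which every sequent has exactly one formula in its succedent. A uniform proof ($\mathbf{O}$-proof) is an $\mathbf{I}$-proof in which any sequent that has a non-atomic formula distinct from $\bot$ in its succedent occurs only as the conclusion of an inference rule that introduces the top-level logical symbol of that formula. A rule "is used" if some instance of that schema occurs in the proof. *)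

theory Defs
  imports Main "HOL-Library.Multiset"
begin

section \<open>First-order syntax (locally nameless: bound variables as de Bruijn indices)\<close>

text \<open>Function symbols and predicate symbols are natural numbers (a countably infinite
signature, every symbol usable at every arity). A constant is a 0-ary function symbol
application Fn c []. Free variables of the object language behave exactly like constants
in this calculus (no rule substitutes for them), so they are represented as constants.\<close>

datatype tm = Bnd nat | Fn nat "tm list"

datatype fm =
    Atom nat "tm list"
  | Top
  | Bot
  | And fm fm
  | Or fm fm
  | Imp fm fm
  | All fm
  | Ex fm

definition Neg :: "fm \<Rightarrow> fm" where "Neg A = Imp A Bot"

primrec closed_tm :: "nat \<Rightarrow> tm \<Rightarrow> bool" where
  "closed_tm d (Bnd i) = (i < d)"
| "closed_tm d (Fn f ts) = list_all (closed_tm d) ts"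

primrec closed_fm :: "nat \<Rightarrow> fm \<Rightarrow> bool" where
  "closed_fm d (Atom p ts) = list_all (closed_tm d) ts"
| "closed_fm d Top = True"
| "closed_fm d Bot = True"
| "closed_fm d (And A B) = (closed_fm d A \<and> closed_fm d B)"
| "closed_fm d (Or A B) = (closed_fm d A \<and> closed_fm d B)"
| "closed_fm d (Imp A B) = (closed_fm d A \<and> closed_fm d B)"
| "closed_fm d (All A) = closed_fm (Suc d) A"
| "closed_fm d (Ex A) = closed_fm (Suc d) A"

definition wff :: "fm \<Rightarrow> bool" where "wff A = closed_fm 0 A"

text \<open>Instantiation of bound index k by a closed term t; B[t/x] for the body B of a quantifier
is inst_fm 0 t B.\<close>
primrec inst_tm :: "nat \<Rightarrow> tm \<Rightarrow> tm \<Rightarrow> tm" where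
  "inst_tm k t (Bnd i) = (if i = k then t else Bnd i)"
| "inst_tm k t (Fn f ts) = Fn f (map (inst_tm k t) ts)"

primrec inst_fm :: "nat \<Rightarrow> tm \<Rightarrow> fm \<Rightarrow> fm" where
  "inst_fm k t (Atom p ts) = Atom p (map (inst_tm k t) ts)"
| "inst_fm k t Top = Top"
| "inst_fm k t Bot = Bot"
| "inst_fm k t (And A B) = And (inst_fm k t A) (inst_fm k t B)"
| "inst_fm k t (Or A B) = Or (inst_fm k t A) (inst_fm k t B)"
| "inst_fm k t (Imp A B) = Imp (inst_fm k t A) (inst_fm k t B)"
| "inst_fm k t (All A) = All (inst_fm (Suc k) t A)"
| "inst_fm k t (Ex A) = Ex (inst_fm (Suc k) t A)"

fun consts_tm :: "tm \<Rightarrow> nat set" where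
  "consts_tm (Bnd i) = {}"
| "consts_tm (Fn f ts) = (if ts = [] then {f} else {}) \<union> (\<Union>t\<in>set ts. consts_tm t)"

primrec consts_fm :: "fm \<Rightarrow> nat set" where
  "consts_fm (Atom p ts) = (\<Union>t\<in>set ts. consts_tm t)"
| "consts_fm Top = {}"
| "consts_fm Bot = {}"
| "consts_fm (And A B) = consts_fm A \<union> consts_fm B"
| "consts_fm (Or A B) = consts_fm A \<union> consts_fm B"
| "consts_fm (Imp A B) = consts_fm A \<union> consts_fm B"
| "consts_fm (All A) = consts_fm A"
| "consts_fm (Ex A) = consts_fm A"

type_synonym sequent = "fm multiset \<times> fm multiset"

definition consts_seq :: "sequent \<Rightarrow> nat set" where
  "consts_seq s = (\<Union>A\<in>set_mset (fst s). consts_fm A) \<union> (\<Union>A\<in>set_mset (snd s). consts_fm A)"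

definition is_atomic :: "fm \<Rightarrow> bool" where
  "is_atomic A = (\<exists>p ts. A = Atom p ts)"

definition is_axiom :: "sequent \<Rightarrow> bool" where
  "is_axiom s = (Top \<in># snd s \<or> (\<exists>A. (A = Bot \<or> is_atomic A) \<and> A \<in># fst s \<and> A \<in># snd s))"

datatype rule = Axiom | ContrL | ContrR | BotR | AndL | OrL | AndR | OrR | ImpL | ImpR
  | AllL | ExR | ExL | AllR

fun rinst :: "rule \<Rightarrow> sequent list \<Rightarrow> sequent \<Rightarrow> bool" where
  "rinst Axiom ps c = (ps = [] \<and> is_axiom c)"
| "rinst ContrL ps c = (\<exists>B \<Gamma> \<Delta>. ps = [(add_mset B (add_mset B \<Gamma>), \<Delta>)] \<and> c = (add_mset B \<Gamma>, \<Delta>))"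
| "rinst ContrR ps c = (\<exists>B \<Gamma> \<Delta>. ps = [(\<Gamma>, add_mset B (add_mset B \<Delta>))] \<and> c = (\<Gamma>, add_mset B \<Delta>))"
| "rinst BotR ps c = (\<exists>D \<Gamma> \<Delta>. ps = [(\<Gamma>, add_mset Bot \<Delta>)] \<and> c = (\<Gamma>, add_mset D \<Delta>))"
| "rinst AndL ps c = (\<exists>B D \<Gamma> \<Delta>. (ps = [(add_mset B \<Gamma>, \<Delta>)] \<or> ps = [(add_mset D \<Gamma>, \<Delta>)])
      \<and> c = (add_mset (And B D) \<Gamma>, \<Delta>))"
| "rinst OrL ps c = (\<exists>B D \<Gamma> \<Delta>. ps = [(add_mset B \<Gamma>, \<Delta>), (add_mset D \<Gamma>, \<Delta>)]
      \<and> c = (add_mset (Or B D) \<Gamma>, \<Delta>))"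
| "rinst AndR ps c = (\<exists>B D \<Gamma> \<Delta>. ps = [(\<Gamma>, add_mset B \<Delta>), (\<Gamma>, add_mset D \<Delta>)]
      \<and> c = (\<Gamma>, add_mset (And B D) \<Delta>))"
| "rinst OrR ps c = (\<exists>B D \<Gamma> \<Delta>. (ps = [(\<Gamma>, add_mset B \<Delta>)] \<or> ps = [(\<Gamma>, add_mset D \<Delta>)])
      \<and> c = (\<Gamma>, add_mset (Or B D) \<Delta>))"
| "rinst ImpL ps c = (\<exists>B D \<Gamma> \<Delta> \<Theta>. ps = [(\<Gamma>, add_mset B \<Delta>), (add_mset D \<Gamma>, \<Theta>)]
      \<and> c = (add_mset (Imp B D) \<Gamma>, \<Delta> + \<Theta>))"
| "rinst ImpR ps c = (\<exists>B D \<Gamma> \<Delta>. ps = [(add_mset B \<Gamma>, add_mset D \<Delta>)]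
      \<and> c = (\<Gamma>, add_mset (Imp B D) \<Delta>))"
| "rinst AllL ps c = (\<exists>B t \<Gamma> \<Delta>. closed_tm 0 t \<and> ps = [(add_mset (inst_fm 0 t B) \<Gamma>, \<Delta>)]
      \<and> c = (add_mset (All B) \<Gamma>, \<Delta>))"
| "rinst ExR ps c = (\<exists>B t \<Gamma> \<Delta>. closed_tm 0 t \<and> ps = [(\<Gamma>, add_mset (inst_fm 0 t B) \<Delta>)]
      \<and> c = (\<Gamma>, add_mset (Ex B) \<Delta>))"
| "rinst ExL ps c = (\<exists>B x \<Gamma> \<Delta>. ps = [(add_mset (inst_fm 0 (Fn x []) B) \<Gamma>, \<Delta>)]
      \<and> c = (add_mset (Ex B) \<Gamma>, \<Delta>) \<and> x \<notin> consts_seq c)"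
| "rinst AllR ps c = (\<exists>B x \<Gamma> \<Delta>. ps = [(\<Gamma>, add_mset (inst_fm 0 (Fn x []) B) \<Delta>)]
      \<and> c = (\<Gamma>, add_mset (All B) \<Delta>) \<and> x \<notin> consts_seq c)"

text \<open>A node records its sequent, the rule schema of which it is the conclusion
(Axiom for leaves), and its subproofs.\<close>
datatype ptree = PT sequent rule "ptree list"

primrec root :: "ptree \<Rightarrow> sequent" where
  "root (PT s r ps) = s"

fun cproof :: "ptree \<Rightarrow> bool" where
  "cproof (PT s r ps) = (rinst r (map root ps) s \<and> (\<forall>p\<in>set ps. cproof p))"

fun all_seqs :: "ptree \<Rightarrow> sequent set" where
  "all_seqs (PT s r ps) = insert s (\<Union>p\<in>set ps. all_seqs p)"

fun uses :: "rule \<Rightarrow> ptree \<Rightarrow> bool" where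
  "uses r (PT s r' ps) = (r = r' \<or> (\<exists>p\<in>set ps. uses r p))"

definition iproof :: "ptree \<Rightarrow> bool" where
  "iproof p = (cproof p \<and> (\<forall>s\<in>all_seqs p. size (snd s) = 1))"

text \<open>Uniformity condition at a node: if the (unique) succedent formula is non-atomic and
distinct from Bot, the node must be the conclusion of the rule introducing its top-level
symbol (for Top there is no such rule, so such a node must be an axiom leaf).\<close>
fun intro_ok :: "rule \<Rightarrow> fm \<Rightarrow> bool" where
  "intro_ok r (Atom p ts) = True"
| "intro_ok r Bot = True"
| "intro_ok r Top = False"
| "intro_ok r (And A B) = (r = AndR)"
| "intro_ok r (Or A B) = (r = OrR)"
| "intro_ok r (Imp A B) = (r = ImpR)"
| "intro_ok r (All A) = (r = AllR)"
| "intro_ok r (Ex A) = (r = ExR)"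

fun uniform_nodes :: "ptree \<Rightarrow> bool" where
  "uniform_nodes (PT s r ps) =
     ((r \<noteq> Axiom \<longrightarrow> (\<forall>A. A \<in># snd s \<longrightarrow> intro_ok r A)) \<and> (\<forall>p\<in>set ps. uniform_nodes p))"

definition uproof :: "ptree \<Rightarrow> bool" where
  "uproof p = (iproof p \<and> uniform_nodes p)"

definition goal_seq :: "fm \<Rightarrow> fm multiset \<Rightarrow> sequent" where
  "goal_seq G \<Gamma> = (add_mset (Neg G) \<Gamma>, {#G#})"

definition restricted :: "ptree \<Rightarrow> bool" where
  "restricted p =
     (\<not> uses AllR p
      \<or> ((\<not> uses OrR p \<or> \<not> uses OrL p) \<and> (\<not> uses ExR p \<or> (\<not> uses OrL p \<and> \<not> uses ExL p)))
      \<or> (\<not> uses AllL p \<and> \<not> uses ImpR p))"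

end

theory Submission
  imports Defs
begin

primrec ren_tm :: "(nat \<Rightarrow> nat) \<Rightarrow> tm \<Rightarrow> tm" where
  "ren_tm \<sigma> (Bnd i) = Bnd i"
| "ren_tm \<sigma> (Fn f ts) = Fn (if ts = [] then \<sigma> f else f) (map (ren_tm \<sigma>) ts)"

primrec ren_fm :: "(nat \<Rightarrow> nat) \<Rightarrow> fm \<Rightarrow> fm" where
  "ren_fm \<sigma> (Atom p ts) = Atom p (map (ren_tm \<sigma>) ts)"
| "ren_fm \<sigma> Top = Top"
| "ren_fm \<sigma> Bot = Bot"
| "ren_fm \<sigma> (And A B) = And (ren_fm \<sigma> A) (ren_fm \<sigma> B)"
| "ren_fm \<sigma> (Or A B) = Or (ren_fm \<sigma> A) (ren_fm \<sigma> B)"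
| "ren_fm \<sigma> (Imp A B) = Imp (ren_fm \<sigma> A) (ren_fm \<sigma> B)"
| "ren_fm \<sigma> (All A) = All (ren_fm \<sigma> A)"
| "ren_fm \<sigma> (Ex A) = Ex (ren_fm \<sigma> A)"

primrec fsize :: "fm \<Rightarrow> nat" where
  "fsize (Atom p ts) = 1"
| "fsize Top = 1"
| "fsize Bot = 1"
| "fsize (And A B) = Suc (fsize A + fsize B)"
| "fsize (Or A B) = Suc (fsize A + fsize B)"
| "fsize (Imp A B) = Suc (fsize A + fsize B)"
| "fsize (All A) = Suc (fsize A)"
| "fsize (Ex A) = Suc (fsize A)"

lemma fsize_inst[simp]: "fsize (inst_fm k t A) = fsize A"
  by (induct A arbitrary: k) auto

lemma ren_inst_tm: "ren_tm \<sigma> (inst_tm k t s) = inst_tm k (ren_tm \<sigma> t) (ren_tm \<sigma> s)"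
  by (induct s) auto

lemma ren_inst_fm: "ren_fm \<sigma> (inst_fm k t A) = inst_fm k (ren_tm \<sigma> t) (ren_fm \<sigma> A)"
  by (induct A arbitrary: k) (auto simp: ren_inst_tm)

lemma consts_ren_tm: "consts_tm (ren_tm \<sigma> t) = \<sigma> ` consts_tm t"
  by (induct t) (auto simp: image_UN)

lemma consts_ren_fm: "consts_fm (ren_fm \<sigma> A) = \<sigma> ` consts_fm A"
  by (induct A) (auto simp: consts_ren_tm image_UN)

lemma ren_tm_cong: "(\<And>x. x \<in> consts_tm t \<Longrightarrow> \<sigma> x = \<tau> x) \<Longrightarrow> ren_tm \<sigma> t = ren_tm \<tau> t"
  by (induct t) auto

lemma ren_fm_cong: "(\<And>x. x \<in> consts_fm A \<Longrightarrow> \<sigma> x = \<tau> x) \<Longrightarrow> ren_fm \<sigma> A = ren_fm \<tau> A"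
  by (induct A) (auto intro: ren_tm_cong)

lemma ren_tm_id0: "ren_tm (\<lambda>x. x) t = t"
  by (induct t) (auto intro: map_idI)

lemma ren_tm_id[simp]: "ren_tm id t = t"
  using ren_tm_id0 by (simp add: id_def)

lemma ren_fm_id0: "ren_fm (\<lambda>x. x) A = A"
  by (induct A) (auto intro: map_idI simp: ren_tm_id0)

lemma ren_fm_id[simp]: "ren_fm id A = A"
  using ren_fm_id0 by (simp add: id_def)

lemma ren_fm_triv: "(\<And>x. x \<in> consts_fm A \<Longrightarrow> \<sigma> x = x) \<Longrightarrow> ren_fm \<sigma> A = A"
  using ren_fm_cong[of A \<sigma> id] by simp

lemma closed_ren_tm: "closed_tm d t \<Longrightarrow> closed_tm d (ren_tm \<sigma> t)"
  by (induct t) (auto simp: list_all_iff)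

lemma consts_inst_tm: "consts_tm (inst_tm k t s) \<subseteq> consts_tm s \<union> consts_tm t"
  by (induct s) auto

lemma consts_inst_fm: "consts_fm (inst_fm k t A) \<subseteq> consts_fm A \<union> consts_tm t"
  by (induct A arbitrary: k) (use consts_inst_tm in fastforce)+

lemma consts_inst_tm2: "consts_tm s \<subseteq> consts_tm (inst_tm k t s)"
  by (induct s) auto

lemma consts_inst_fm2: "consts_fm A \<subseteq> consts_fm (inst_fm k t A)"
  by (induct A arbitrary: k) (use consts_inst_tm2 in fastforce)+

lemma finite_consts_tm[simp]: "finite (consts_tm t)"
  by (induct t) auto

lemma finite_consts_fm[simp]: "finite (consts_fm A)"
  by (induct A) auto

definition ab :: "fm \<Rightarrow> bool" where "ab C = (is_atomic C \<or> C = Bot)"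

lemma ab_ren[simp]: "ab (ren_fm \<sigma> C) = ab C"
  by (cases C) (auto simp: ab_def is_atomic_def)

definition cs :: "fm set \<Rightarrow> nat set" where "cs S = (\<Union>A\<in>S. consts_fm A)"

lemma cs_insert[simp]: "cs (insert A S) = consts_fm A \<union> cs S"
  by (auto simp: cs_def)
lemma cs_Un[simp]: "cs (S \<union> T) = cs S \<union> cs T"
  by (auto simp: cs_def)
lemma cs_empty[simp]: "cs {} = {}"
  by (auto simp: cs_def)
lemmas cs_simps = cs_insert cs_Un cs_empty

lemma finite_cs[simp]: "finite S \<Longrightarrow> finite (cs S)"
  by (auto simp: cs_def)

lemma cs_mono: "A \<in> S \<Longrightarrow> consts_fm A \<subseteq> cs S"
  by (auto simp: cs_def)


inductive Der :: "bool \<Rightarrow> rule set \<Rightarrow> nat \<Rightarrow> fm set \<Rightarrow> fm \<Rightarrow> bool" where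
  axT: "Der u R n S Top"
| ax: "C \<in> S \<Longrightarrow> ab C \<Longrightarrow> Der u R n S C"
| botR: "BotR \<in> R \<Longrightarrow> (u \<longrightarrow> ab C) \<Longrightarrow> Der u R n S Bot \<Longrightarrow> Der u R (Suc n) S C"
| andL1: "AndL \<in> R \<Longrightarrow> (u \<longrightarrow> ab C) \<Longrightarrow> And A B \<in> S \<Longrightarrow> Der u R n (insert A S) C \<Longrightarrow> Der u R (Suc n) S C"
| andL2: "AndL \<in> R \<Longrightarrow> (u \<longrightarrow> ab C) \<Longrightarrow> And A B \<in> S \<Longrightarrow> Der u R n (insert B S) C \<Longrightarrow> Der u R (Suc n) S C"
| orL: "OrL \<in> R \<Longrightarrow> (u \<longrightarrow> ab C) \<Longrightarrow> Or A B \<in> S \<Longrightarrow> Der u R n (insert A S) C \<Longrightarrow> Der u R n (insert B S) C \<Longrightarrow> Der u R (Suc n) S C"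
| impL: "ImpL \<in> R \<Longrightarrow> (u \<longrightarrow> ab C) \<Longrightarrow> Imp A B \<in> S \<Longrightarrow> Der u R n S A \<Longrightarrow> Der u R n (insert B S) C \<Longrightarrow> Der u R (Suc n) S C"
| allL: "AllL \<in> R \<Longrightarrow> (u \<longrightarrow> ab C) \<Longrightarrow> All A \<in> S \<Longrightarrow> closed_tm 0 t \<Longrightarrow> Der u R n (insert (inst_fm 0 t A) S) C \<Longrightarrow> Der u R (Suc n) S C"
| exL: "ExL \<in> R \<Longrightarrow> (u \<longrightarrow> ab C) \<Longrightarrow> Ex A \<in> S \<Longrightarrow> x \<notin> cs S \<Longrightarrow> x \<notin> consts_fm C \<Longrightarrow> Der u R n (insert (inst_fm 0 (Fn x []) A) S) C \<Longrightarrow> Der u R (Suc n) S C"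
| andR: "AndR \<in> R \<Longrightarrow> Der u R n S A \<Longrightarrow> Der u R n S B \<Longrightarrow> Der u R (Suc n) S (And A B)"
| orR1: "OrR \<in> R \<Longrightarrow> Der u R n S A \<Longrightarrow> Der u R (Suc n) S (Or A B)"
| orR2: "OrR \<in> R \<Longrightarrow> Der u R n S B \<Longrightarrow> Der u R (Suc n) S (Or A B)"
| impR: "ImpR \<in> R \<Longrightarrow> Der u R n (insert A S) B \<Longrightarrow> Der u R (Suc n) S (Imp A B)"
| allR: "AllR \<in> R \<Longrightarrow> x \<notin> cs S \<Longrightarrow> x \<notin> consts_fm A \<Longrightarrow> Der u R n S (inst_fm 0 (Fn x []) A) \<Longrightarrow> Der u R (Suc n) S (All A)"
| exR: "ExR \<in> R \<Longrightarrow> closed_tm 0 t \<Longrightarrow> Der u R n S (inst_fm 0 t A) \<Longrightarrow> Der u R (Suc n) S (Ex A)"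

lemma Der_Suc: "Der u R n S C \<Longrightarrow> Der u R (Suc n) S C"
  by (induct rule: Der.induct) (auto intro: Der.intros)

lemma Der_le: "Der u R n S C \<Longrightarrow> n \<le> m \<Longrightarrow> Der u R m S C"
proof (induct m)
  case 0 then show ?case by simp
next
  case (Suc m) then show ?case by (cases "n = Suc m") (auto intro: Der_Suc)
qed

lemma Der_R: "Der u R n S C \<Longrightarrow> R \<subseteq> R' \<Longrightarrow> Der u R' n S C"
  by (induct rule: Der.induct) (auto intro: Der.intros)

lemma fresh_ex: "finite (X::nat set) \<Longrightarrow> \<exists>y. y \<notin> X"
  using ex_new_if_finite infinite_UNIV_nat by blast

lemma ren_upd_fm: "x \<notin> consts_fm A \<Longrightarrow> ren_fm (\<sigma>(x := y)) A = ren_fm \<sigma> A"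
  by (rule ren_fm_cong) auto

lemma ren_upd_set: "x \<notin> cs S \<Longrightarrow> ren_fm (\<sigma>(x := y)) ` S = ren_fm \<sigma> ` S"
  by (auto simp: cs_def ren_upd_fm image_iff)

lemma ren_inst_upd: "x \<notin> consts_fm A \<Longrightarrow>
  ren_fm (\<sigma>(x := y)) (inst_fm 0 (Fn x []) A) = inst_fm 0 (Fn y []) (ren_fm \<sigma> A)"
  by (simp add: ren_inst_fm ren_upd_fm)

lemma Der_ren: "Der u R n S C \<Longrightarrow> ren_fm \<sigma> ` S \<subseteq> S' \<Longrightarrow> finite S' \<Longrightarrow> Der u R n S' (ren_fm \<sigma> C)"
proof (induct arbitrary: \<sigma> S' rule: Der.induct)
  case (axT u R n S)
  then show ?case by (auto intro: Der.intros)
next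
  case (ax C S u R n)
  then show ?case by (intro Der.ax) auto
next
  case (botR R u C n S)
  then show ?case by (auto intro: Der.botR)
next
  case (andL1 R u C A B S n)
  have "Der u R n (insert (ren_fm \<sigma> A) S') (ren_fm \<sigma> C)" using andL1 by (intro andL1(5)) auto
  then show ?case using andL1 by (intro Der.andL1[of _ _ _ "ren_fm \<sigma> A" "ren_fm \<sigma> B"]) auto
next
  case (andL2 R u C A B S n)
  have "Der u R n (insert (ren_fm \<sigma> B) S') (ren_fm \<sigma> C)" using andL2 by (intro andL2(5)) auto
  then show ?case using andL2 by (intro Der.andL2[of _ _ _ "ren_fm \<sigma> A" "ren_fm \<sigma> B"]) auto
next
  case (orL R u C A B S n)
  have "Der u R n (insert (ren_fm \<sigma> A) S') (ren_fm \<sigma> C)" using orL by (intro orL(5)) auto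
  moreover have "Der u R n (insert (ren_fm \<sigma> B) S') (ren_fm \<sigma> C)" using orL by (intro orL(7)) auto
  ultimately show ?case using orL by (intro Der.orL[of _ _ _ "ren_fm \<sigma> A" "ren_fm \<sigma> B"]) auto
next
  case (impL R u C A B S n)
  have "Der u R n S' (ren_fm \<sigma> A)" using impL by (intro impL(5)) auto
  moreover have "Der u R n (insert (ren_fm \<sigma> B) S') (ren_fm \<sigma> C)" using impL by (intro impL(7)) auto
  ultimately show ?case using impL by (intro Der.impL[of _ _ _ "ren_fm \<sigma> A" "ren_fm \<sigma> B"]) auto
next
  case (allL R u C A S t n)
  have "Der u R n (insert (ren_fm \<sigma> (inst_fm 0 t A)) S') (ren_fm \<sigma> C)" using allL by (intro allL(6)) auto
  then show ?case using allL
    by (intro Der.allL[of _ _ _ "ren_fm \<sigma> A" _ "ren_tm \<sigma> t"]) (auto simp: closed_ren_tm ren_inst_fm)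
next
  case (exL R u C A S x n)
  have fin: "finite (cs S' \<union> consts_fm (ren_fm \<sigma> C))" using exL by simp
  obtain y where y: "y \<notin> cs S' \<union> consts_fm (ren_fm \<sigma> C)" using fresh_ex[OF fin] by blast
  have xA: "x \<notin> consts_fm A" using exL cs_mono[of "Ex A" S] by auto
  have AS: "ren_fm \<sigma> (Ex A) \<in> S'" using exL by auto
  have e1: "ren_fm (\<sigma>(x := y)) C = ren_fm \<sigma> C" using exL by (simp add: ren_upd_fm)
  have h1: "ren_fm (\<sigma>(x := y)) ` (insert (inst_fm 0 (Fn x []) A) S) \<subseteq> insert (inst_fm 0 (Fn y []) (ren_fm \<sigma> A)) S'"
    using exL(8) ren_upd_set[OF exL(4), of \<sigma> y] ren_inst_upd[OF xA, of \<sigma> y] by (simp only: image_insert) blast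
  have "Der u R n (insert (inst_fm 0 (Fn y []) (ren_fm \<sigma> A)) S') (ren_fm (\<sigma>(x := y)) C)"
    by (rule exL(7)[OF h1]) (use exL(9) in simp)
  then show ?case using AS y exL(1,2) e1 cs_mono[OF AS]
    by (intro Der.exL[of _ _ _ "ren_fm \<sigma> A" _ y]) auto
next
  case (andR R u n S A B)
  then show ?case by (auto intro: Der.andR)
next
  case (orR1 R u n S A B)
  then show ?case by (auto intro: Der.orR1)
next
  case (orR2 R u n S B A)
  then show ?case by (auto intro: Der.orR2)
next
  case (impR R u n A S B)
  have "Der u R n (insert (ren_fm \<sigma> A) S') (ren_fm \<sigma> B)" using impR by (intro impR(3)) auto
  then show ?case using impR by (auto intro!: Der.impR)
next
  case (allR R x S A u n)
  have fin: "finite (cs S' \<union> consts_fm (ren_fm \<sigma> A))" using allR by simp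
  obtain y where y: "y \<notin> cs S' \<union> consts_fm (ren_fm \<sigma> A)" using fresh_ex[OF fin] by blast
  have h1: "ren_fm (\<sigma>(x := y)) ` S \<subseteq> S'"
    using allR(6) ren_upd_set[OF allR(2), of \<sigma> y] by simp
  have "Der u R n S' (ren_fm (\<sigma>(x := y)) (inst_fm 0 (Fn x []) A))"
    by (rule allR(5)[OF h1 allR(7)])
  then have "Der u R n S' (inst_fm 0 (Fn y []) (ren_fm \<sigma> A))"
    using ren_inst_upd[OF allR(3), of \<sigma> y] by simp
  then show ?case using y allR(1) by (auto intro: Der.allR)
next
  case (exR R t u n S A)
  then show ?case by (auto intro!: Der.exR[of _ "ren_tm \<sigma> t"] simp: closed_ren_tm ren_inst_fm[symmetric])
qed

lemma Der_weak: "Der u R n S C \<Longrightarrow> S \<subseteq> S' \<Longrightarrow> finite S' \<Longrightarrow> Der u R n S' C"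
  using Der_ren[of u R n S C id S'] by simp

lemma Der_rename: "Der u R n (insert (inst_fm 0 (Fn x []) A) S) C \<Longrightarrow> x \<notin> cs S \<Longrightarrow> x \<notin> consts_fm A \<Longrightarrow>
   x \<notin> consts_fm C \<Longrightarrow> finite S \<Longrightarrow> Der u R n (insert (inst_fm 0 (Fn y []) A) S) C"
  using Der_ren[of u R n "insert (inst_fm 0 (Fn x []) A) S" C "id(x := y)" "insert (inst_fm 0 (Fn y []) A) S"]
    ren_upd_set[of x S id y] ren_inst_upd[of x A id y] ren_upd_fm[of x C id y] by auto

definition U :: "fm set \<Rightarrow> fm \<Rightarrow> bool" where "U S C = (\<exists>n. Der True UNIV n S C)"

lemma U_weak: "U S C \<Longrightarrow> S \<subseteq> S' \<Longrightarrow> finite S' \<Longrightarrow> U S' C"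
  unfolding U_def using Der_weak by blast

lemma U_ax: "C \<in> S \<Longrightarrow> ab C \<Longrightarrow> U S C"
  unfolding U_def by (blast intro: Der.ax)

lemma U_top: "U S Top"
  unfolding U_def by (blast intro: Der.axT)

lemma U_botR: "ab C \<Longrightarrow> U S Bot \<Longrightarrow> U S C"
  unfolding U_def by (blast intro: Der.botR)

lemma U_and: "U S A \<Longrightarrow> U S B \<Longrightarrow> U S (And A B)"
  unfolding U_def by (meson Der.andR Der_le UNIV_I max.cobounded1 max.cobounded2)

lemma U_or1: "U S A \<Longrightarrow> U S (Or A B)"
  unfolding U_def by (blast intro: Der.orR1)

lemma U_or2: "U S B \<Longrightarrow> U S (Or A B)"
  unfolding U_def by (blast intro: Der.orR2)

lemma U_imp: "U (insert A S) B \<Longrightarrow> U S (Imp A B)"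
  unfolding U_def by (blast intro: Der.impR)

lemma U_all: "x \<notin> cs S \<Longrightarrow> x \<notin> consts_fm A \<Longrightarrow> U S (inst_fm 0 (Fn x []) A) \<Longrightarrow> U S (All A)"
  unfolding U_def by (blast intro: Der.allR)

lemma U_ex: "closed_tm 0 t \<Longrightarrow> U S (inst_fm 0 t A) \<Longrightarrow> U S (Ex A)"
  unfolding U_def by (blast intro: Der.exR)

lemma U_andL1: "ab C \<Longrightarrow> And A B \<in> S \<Longrightarrow> U (insert A S) C \<Longrightarrow> U S C"
  unfolding U_def by (blast intro: Der.andL1)

lemma U_andL2: "ab C \<Longrightarrow> And A B \<in> S \<Longrightarrow> U (insert B S) C \<Longrightarrow> U S C"
  unfolding U_def by (blast intro: Der.andL2)

lemma U_orL: "ab C \<Longrightarrow> Or A B \<in> S \<Longrightarrow> U (insert A S) C \<Longrightarrow> U (insert B S) C \<Longrightarrow> U S C"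
  unfolding U_def by (meson Der.orL Der_le UNIV_I max.cobounded1 max.cobounded2)

lemma U_impL: "ab C \<Longrightarrow> Imp A B \<in> S \<Longrightarrow> U S A \<Longrightarrow> U (insert B S) C \<Longrightarrow> U S C"
  unfolding U_def by (meson Der.impL Der_le UNIV_I max.cobounded1 max.cobounded2)

lemma U_allL: "ab C \<Longrightarrow> All A \<in> S \<Longrightarrow> closed_tm 0 t \<Longrightarrow> U (insert (inst_fm 0 t A) S) C \<Longrightarrow> U S C"
  unfolding U_def by (blast intro: Der.allL)

lemma U_exL: "ab C \<Longrightarrow> Ex A \<in> S \<Longrightarrow> x \<notin> cs S \<Longrightarrow> x \<notin> consts_fm C \<Longrightarrow>
    U (insert (inst_fm 0 (Fn x []) A) S) C \<Longrightarrow> U S C"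
  unfolding U_def by (blast intro: Der.exL)

lemma consts_inst_x: "consts_fm (inst_fm 0 (Fn x []) A) \<subseteq> consts_fm A \<union> {x}"
  using consts_inst_fm[of 0 "Fn x []" A] by simp

lemma dec: "finite S \<Longrightarrow> finite K \<Longrightarrow> cs S \<inter> K = {} \<Longrightarrow> consts_fm C \<inter> K = {} \<Longrightarrow>
  (\<And>S' a. S \<subseteq> S' \<Longrightarrow> finite S' \<Longrightarrow> cs S' \<inter> K = {} \<Longrightarrow> consts_fm a \<inter> K = {} \<Longrightarrow> ab a \<Longrightarrow> U S' a) \<Longrightarrow> U S C"
proof (induct "fsize C" arbitrary: C S rule: less_induct)
  case less
  show ?case
  proof (cases C)
    case (Atom p ts) then show ?thesis using less by (auto simp: ab_def is_atomic_def)
  next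
    case Top then show ?thesis by (simp add: U_top)
  next
    case Bot then show ?thesis using less by (auto simp: ab_def)
  next
    case (And A B)
    have "U S A" by (rule less(1)) (use less And in auto)
    moreover have "U S B" by (rule less(1)) (use less And in auto)
    ultimately show ?thesis using And by (simp add: U_and)
  next
    case (Or A B)
    have "U S A" by (rule less(1)) (use less Or in auto)
    then show ?thesis using Or by (simp add: U_or1)
  next
    case (Imp A B)
    have "U (insert A S) B" by (rule less(1)) (use less Imp in auto)
    then show ?thesis using Imp by (simp add: U_imp)
  next
    case (All A)
    have fin: "finite (K \<union> cs S \<union> consts_fm A)" using less by simp
    obtain x where x: "x \<notin> K \<union> cs S \<union> consts_fm A" using fresh_ex[OF fin] by blast
    have "U S (inst_fm 0 (Fn x []) A)"
      by (rule less(1)) (use less All x consts_inst_x[of x A] in auto)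
    then show ?thesis using All x by (auto intro: U_all)
  next
    case (Ex A)
    obtain x where x: "x \<notin> K" using fresh_ex[OF less(3)] by blast
    have "U S (inst_fm 0 (Fn x []) A)"
      by (rule less(1)) (use less Ex x consts_inst_x[of x A] in auto)
    then show ?thesis using Ex by (auto intro: U_ex[of "Fn x []"])
  qed
qed

lemma dec0: "finite S \<Longrightarrow> (\<And>S' a. S \<subseteq> S' \<Longrightarrow> finite S' \<Longrightarrow> ab a \<Longrightarrow> U S' a) \<Longrightarrow> U S C"
  by (rule dec[of S "{}"]) auto

lemma everything: "finite S \<Longrightarrow> Imp G Bot \<in> S \<Longrightarrow> U S G \<Longrightarrow> U S C"
proof (rule dec0)
  fix S' a assume *: "S \<subseteq> S'" "finite S'" "ab a" "finite S" "Imp G Bot \<in> S" "U S G"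
  then have "U S' G" using U_weak by blast
  moreover have "U (insert Bot S') a"
  proof (cases "a = Bot")
    case True then show ?thesis by (auto intro: U_ax simp: ab_def)
  next
    case False
    have "U (insert Bot S') Bot" by (rule U_ax) (auto simp: ab_def)
    then show ?thesis using *(3) by (rule U_botR[rotated])
  qed
  ultimately show "U S' a" using * by (auto intro: U_impL)
qed auto

lemma botadm: "finite S \<Longrightarrow> U S Bot \<Longrightarrow> U S C"
proof (rule dec0)
  fix S' a assume *: "S \<subseteq> S'" "finite S'" "ab a" "U S Bot"
  then show "U S' a" using U_weak U_botR by blast
qed auto

definition Fr :: "fm \<Rightarrow> nat set \<Rightarrow> fm set \<Rightarrow> fm \<Rightarrow> bool" where
  "Fr G E S C = (\<forall>Y. finite Y \<longrightarrow> cs Y \<inter> E = {} \<longrightarrow> U (S \<union> Y) C \<longrightarrow> U (S \<union> Y) G)"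

lemma Fr_union: "Fr G E S C \<Longrightarrow> finite Y \<Longrightarrow> cs Y \<inter> E = {} \<Longrightarrow> Fr G E (S \<union> Y) C"
  unfolding Fr_def
  by (metis Int_Un_distrib2 Un_assoc Un_empty cs_simps(2) finite_UnI)

lemma Fr_insert: "Fr G E S C \<Longrightarrow> consts_fm P \<inter> E = {} \<Longrightarrow> Fr G E (insert P S) C"
  using Fr_union[of G E S C "{P}"] by simp

lemma restart_prem: "finite S \<Longrightarrow> Imp G Bot \<in> S \<Longrightarrow> Fr G E S C \<Longrightarrow> consts_fm P \<inter> E = {} \<Longrightarrow>
  U (insert P S) C \<Longrightarrow> S \<subseteq> S' \<Longrightarrow> finite S' \<Longrightarrow> U (insert P S') X"
proof -
  assume a: "finite S" "Imp G Bot \<in> S" "Fr G E S C" "consts_fm P \<inter> E = {}" "U (insert P S) C"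
    "S \<subseteq> S'" "finite S'"
  have e: "S \<union> {P} = insert P S" by auto
  have "U (S \<union> {P}) C \<longrightarrow> U (S \<union> {P}) G" using a(3,4) unfolding Fr_def by (metis cs_simps(1,3) finite.emptyI finite.insertI Un_empty_right)
  then have "U (insert P S) G" using a(5) e by simp
  then have "U (insert P S') G" by (rule U_weak) (use a(6,7) in auto)
  then show ?thesis by (rule everything[rotated 2]) (use a in auto)
qed

lemma LA_andL1:
  assumes "finite S" "Imp G Bot \<in> S" "Fr G E S C" "And A B \<in> S" "consts_fm A \<inter> E = {}" "U (insert A S) C"
  shows "U S C"
proof (rule dec0)
  fix S' a assume *: "S \<subseteq> S'" "finite S'" "ab a"
  have h1: "U (insert A S') a" by (rule restart_prem[OF assms(1,2,3,5,6) *(1,2)])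
  show "U S' a" by (rule U_andL1[of a A B]) (use h1 *(1,3) assms(4) in blast)+
qed (rule assms(1))

lemma LA_andL2:
  assumes "finite S" "Imp G Bot \<in> S" "Fr G E S C" "And A B \<in> S" "consts_fm B \<inter> E = {}" "U (insert B S) C"
  shows "U S C"
proof (rule dec0)
  fix S' a assume *: "S \<subseteq> S'" "finite S'" "ab a"
  have h1: "U (insert B S') a" by (rule restart_prem[OF assms(1,2,3,5,6) *(1,2)])
  show "U S' a" by (rule U_andL2[of a A B]) (use h1 *(1,3) assms(4) in blast)+
qed (rule assms(1))

lemma LA_orL:
  assumes "finite S" "Imp G Bot \<in> S" "Fr G E S C" "Or A B \<in> S" "consts_fm A \<inter> E = {}"
    "consts_fm B \<inter> E = {}" "U (insert A S) C" "U (insert B S) C"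
  shows "U S C"
proof (rule dec0)
  fix S' a assume *: "S \<subseteq> S'" "finite S'" "ab a"
  have h1: "U (insert A S') a" by (rule restart_prem[OF assms(1,2,3,5,7) *(1,2)])
  moreover have h2: "U (insert B S') a" by (rule restart_prem[OF assms(1,2,3,6,8) *(1,2)])
  show "U S' a" by (rule U_orL[of a A B]) (use h1 h2 *(1,3) assms(4) in blast)+
qed (rule assms(1))

lemma LA_impL:
  assumes "finite S" "Imp G Bot \<in> S" "Fr G E S C" "Imp A B \<in> S" "consts_fm B \<inter> E = {}"
    "U S A" "U (insert B S) C"
  shows "U S C"
proof (rule dec0)
  fix S' a assume *: "S \<subseteq> S'" "finite S'" "ab a"
  have h1: "U (insert B S') a" by (rule restart_prem[OF assms(1,2,3,5,7) *(1,2)])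
  moreover have h2: "U S' A" by (rule U_weak[OF assms(6) *(1,2)])
  show "U S' a" by (rule U_impL[of a A B]) (use h1 h2 *(1,3) assms(4) in blast)+
qed (rule assms(1))

lemma LA_allL:
  assumes "finite S" "Imp G Bot \<in> S" "Fr G E S C" "All A \<in> S" "closed_tm 0 t"
    "consts_fm (inst_fm 0 t A) \<inter> E = {}" "U (insert (inst_fm 0 t A) S) C"
  shows "U S C"
proof (rule dec0)
  fix S' a assume *: "S \<subseteq> S'" "finite S'" "ab a"
  have h1: "U (insert (inst_fm 0 t A) S') a" by (rule restart_prem[OF assms(1,2,3,6,7) *(1,2)])
  show "U S' a" by (rule U_allL[of a A S' t]) (use h1 *(1,3) assms(4,5) in blast)+
qed (rule assms(1))

lemma LA_exL:
  assumes "finite S" "Imp G Bot \<in> S" "Fr G E S C" "Ex A \<in> S" "x \<notin> cs S" "x \<notin> consts_fm C"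
    "consts_fm (inst_fm 0 (Fn x []) A) \<inter> E = {}" "U (insert (inst_fm 0 (Fn x []) A) S) C"
  shows "U S C"
proof (rule dec[of S "{x}"])
  show "cs S \<inter> {x} = {}" "consts_fm C \<inter> {x} = {}" using assms(5,6) by auto
next
  fix S' a assume *: "S \<subseteq> S'" "finite S'" "cs S' \<inter> {x} = {}" "consts_fm a \<inter> {x} = {}" "ab a"
  have h1: "U (insert (inst_fm 0 (Fn x []) A) S') a" by (rule restart_prem[OF assms(1,2,3,7,8) *(1,2)])
  show "U S' a" by (rule U_exL[of a A S' x]) (use h1 *(1,3,4,5) assms(4) in blast)+
qed (use assms(1) in auto)


definition cond :: "rule set \<Rightarrow> nat set \<Rightarrow> fm set \<Rightarrow> bool" where
  "cond R E S = ((AllR \<notin> R \<and> E = {}) \<or> (AllL \<notin> R \<and> ImpR \<notin> R \<and> cs S \<inter> E = {}))"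

lemma cond_comp: "cond R E S \<Longrightarrow> consts_fm P \<subseteq> cs S \<Longrightarrow> consts_fm P \<inter> E = {}"
  unfolding cond_def by blast

lemma cond_insert: "cond R E S \<Longrightarrow> consts_fm P \<inter> E = {} \<Longrightarrow> cond R E (insert P S)"
  unfolding cond_def by auto

lemma cond_union: "cond R E S \<Longrightarrow> cs Y \<inter> E = {} \<Longrightarrow> cond R E (S \<union> Y)"
  unfolding cond_def by auto

lemma Fr_triv: "Fr G E S G"
  unfolding Fr_def by blast

lemma T13: "Der False R n S C \<Longrightarrow> finite S \<Longrightarrow> Imp G Bot \<in> S \<Longrightarrow> finite E \<Longrightarrow> Fr G E S C \<Longrightarrow>
   cond R E S \<Longrightarrow> U S C"
proof (induct n arbitrary: S C E rule: less_induct)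
  case (less n)
  note IH = less(1)
  have fS: "finite S" and NS: "Imp G Bot \<in> S" and fE: "finite E" and FrC: "Fr G E S C" and cd: "cond R E S"
    using less by auto
  from less(2) show ?case
  proof (cases rule: Der.cases)
    case axT then show ?thesis by (simp add: U_top)
  next
    case ax then show ?thesis by (simp add: U_ax)
  next
    case (botR m)
    have "Fr G E S Bot" unfolding Fr_def
    proof (intro allI impI)
      fix Y assume Y: "finite Y" "cs Y \<inter> E = {}" "U (S \<union> Y) Bot"
      then have "U (S \<union> Y) C" using botadm fS by blast
      then show "U (S \<union> Y) G" using FrC Y unfolding Fr_def by blast
    qed
    then have "U S Bot" using IH[of m S Bot E] botR fS NS fE cd by auto
    then show ?thesis using botadm fS by blast
  next
    case (andL1 A B m)
    have eA: "consts_fm A \<inter> E = {}" using cond_comp[OF cd] cs_mono[OF andL1(4)] by auto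
    have "U (insert A S) C"
      using IH[of m "insert A S" C E] andL1 fS NS fE Fr_insert[OF FrC eA] cond_insert[OF cd eA] by auto
    then show ?thesis using LA_andL1[OF fS NS FrC andL1(4) eA] by blast
  next
    case (andL2 A B m)
    have eB: "consts_fm B \<inter> E = {}" using cond_comp[OF cd] cs_mono[OF andL2(4)] by auto
    have "U (insert B S) C"
      using IH[of m "insert B S" C E] andL2 fS NS fE Fr_insert[OF FrC eB] cond_insert[OF cd eB] by auto
    then show ?thesis using LA_andL2[OF fS NS FrC andL2(4) eB] by blast
  next
    case (orL A B m)
    have eA: "consts_fm A \<inter> E = {}" using cond_comp[OF cd] cs_mono[OF orL(4)] by auto
    have eB: "consts_fm B \<inter> E = {}" using cond_comp[OF cd] cs_mono[OF orL(4)] by auto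
    have "U (insert A S) C"
      using IH[of m "insert A S" C E] orL fS NS fE Fr_insert[OF FrC eA] cond_insert[OF cd eA] by auto
    moreover have "U (insert B S) C"
      using IH[of m "insert B S" C E] orL fS NS fE Fr_insert[OF FrC eB] cond_insert[OF cd eB] by auto
    ultimately show ?thesis using LA_orL[OF fS NS FrC orL(4) eA eB] by blast
  next
    case (impL A B m)
    have eB: "consts_fm B \<inter> E = {}" using cond_comp[OF cd] cs_mono[OF impL(4)] by auto
    have "Fr G E S A" unfolding Fr_def
    proof (intro allI impI)
      fix Y assume Y: "finite Y" "cs Y \<inter> E = {}" "U (S \<union> Y) A"
      have fSY: "finite (S \<union> Y)" using fS Y by simp
      have FrY: "Fr G E (S \<union> Y) C" using Fr_union[OF FrC Y(1,2)] .
      have d: "Der False R m (insert B (S \<union> Y)) C" using Der_weak[OF impL(6)] fSY by auto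
      have "U (insert B (S \<union> Y)) C"
        using IH[of m "insert B (S \<union> Y)" C E] d impL(1) fSY NS fE Fr_insert[OF FrY eB]
          cond_insert[OF cond_union[OF cd Y(2)] eB] by auto
      then have "U (S \<union> Y) C" using LA_impL[OF fSY _ FrY _ eB Y(3)] NS impL(4) by blast
      then show "U (S \<union> Y) G" using FrC Y unfolding Fr_def by blast
    qed
    then have "U S A" using IH[of m S A E] impL fS NS fE cd by auto
    moreover have "U (insert B S) C"
      using IH[of m "insert B S" C E] impL fS NS fE Fr_insert[OF FrC eB] cond_insert[OF cd eB] by auto
    ultimately show ?thesis using LA_impL[OF fS NS FrC impL(4) eB] by blast
  next
    case (allL A t m)
    have E0: "E = {}" using cd allL(2) unfolding cond_def by auto
    have e: "consts_fm (inst_fm 0 t A) \<inter> E = {}" using E0 by simp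
    have "U (insert (inst_fm 0 t A) S) C"
      using IH[of m "insert (inst_fm 0 t A) S" C E] allL fS NS fE Fr_insert[OF FrC e] cond_insert[OF cd e] by auto
    then show ?thesis using LA_allL[OF fS NS FrC allL(4) allL(5) e] by blast
  next
    case (exL A x m)
    have fin: "finite (cs S \<union> consts_fm C \<union> consts_fm A \<union> E)" using fS fE by simp
    obtain y where y: "y \<notin> cs S \<union> consts_fm C \<union> consts_fm A \<union> E" using fresh_ex[OF fin] by blast
    have xA: "x \<notin> consts_fm A" using exL(5) cs_mono[OF exL(4)] by auto
    have d: "Der False R m (insert (inst_fm 0 (Fn y []) A) S) C"
      by (rule Der_rename[OF exL(7) exL(5) xA exL(6) fS])
    have e: "consts_fm (inst_fm 0 (Fn y []) A) \<inter> E = {}"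
      using consts_inst_x[of y A] cond_comp[OF cd] cs_mono[OF exL(4)] y by auto
    have "U (insert (inst_fm 0 (Fn y []) A) S) C"
      using IH[of m "insert (inst_fm 0 (Fn y []) A) S" C E] d exL(1) fS NS fE Fr_insert[OF FrC e] cond_insert[OF cd e] by auto
    then show ?thesis using LA_exL[OF fS NS FrC exL(4) _ _ e] y by blast
  next
    case (andR m A B)
    have FrA: "Fr G E S A" unfolding Fr_def
    proof (intro allI impI)
      fix Y assume Y: "finite Y" "cs Y \<inter> E = {}" "U (S \<union> Y) A"
      have fSY: "finite (S \<union> Y)" using fS Y by simp
      have d: "Der False R m (S \<union> Y) B" using Der_weak[OF andR(5)] fSY by auto
      have FrB: "Fr G E (S \<union> Y) B" unfolding Fr_def
      proof (intro allI impI)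
        fix Y' assume Y': "finite Y'" "cs Y' \<inter> E = {}" "U (S \<union> Y \<union> Y') B"
        have "U (S \<union> Y \<union> Y') A" by (rule U_weak[OF Y(3)]) (use fSY Y' in auto)
        then have "U (S \<union> (Y \<union> Y')) (And A B)" using U_and Y' by (simp add: Un_assoc)
        then have "U (S \<union> (Y \<union> Y')) G" using FrC[unfolded Fr_def andR(2), rule_format, of "Y \<union> Y'"] Y Y' by (auto simp: Int_Un_distrib2)
        then show "U (S \<union> Y \<union> Y') G" by (simp add: Un_assoc)
      qed
      have "U (S \<union> Y) B"
        using IH[of m "S \<union> Y" B E] d andR(1,2) fSY NS fE FrB cond_union[OF cd Y(2)] by auto
      then have "U (S \<union> Y) (And A B)" using U_and Y(3) by blast
      then show "U (S \<union> Y) G" using FrC Y andR(2) unfolding Fr_def by blast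
    qed
    have UA: "U S A" using IH[of m S A E] andR fS NS fE cd FrA by auto
    have FrB: "Fr G E S B" unfolding Fr_def
    proof (intro allI impI)
      fix Y assume Y: "finite Y" "cs Y \<inter> E = {}" "U (S \<union> Y) B"
      have "U (S \<union> Y) A" using U_weak[OF UA] fS Y by auto
      then have "U (S \<union> Y) (And A B)" using U_and Y(3) by blast
      then show "U (S \<union> Y) G" using FrC Y andR(2) unfolding Fr_def by blast
    qed
    have UB: "U S B" using IH[of m S B E] andR fS NS fE cd FrB by auto
    show ?thesis using U_and[OF UA UB] andR(2) by simp
  next
    case (orR1 m A B)
    have Fr1: "Fr G E S A" using FrC orR1(2) U_or1 unfolding Fr_def by blast
    show ?thesis using IH[of m S A E] orR1 fS NS fE cd Fr1 U_or1 by auto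
  next
    case (orR2 m B A)
    have Fr1: "Fr G E S B" using FrC orR2(2) U_or2 unfolding Fr_def by blast
    show ?thesis using IH[of m S B E] orR2 fS NS fE cd Fr1 U_or2 by auto
  next
    case (exR t m A)
    have Fr1: "Fr G E S (inst_fm 0 t A)" using FrC exR(2) U_ex[OF exR(4)] unfolding Fr_def by blast
    show ?thesis using IH[of m S "inst_fm 0 t A" E] exR fS NS fE cd Fr1 U_ex by auto
  next
    case (impR m A B)
    have E0: "E = {}" using cd impR(3) unfolding cond_def by auto
    have Fr1: "Fr G E (insert A S) B" unfolding Fr_def
    proof (intro allI impI)
      fix Y assume Y: "finite Y" "cs Y \<inter> E = {}" "U (insert A S \<union> Y) B"
      then have "U (S \<union> Y) (Imp A B)" using U_imp[of A "S \<union> Y" B] by simp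
      then show "U (insert A S \<union> Y) G"
        using FrC Y impR(2) U_weak[of "S \<union> Y" G "insert A S \<union> Y"] fS unfolding Fr_def by auto
    qed
    have "U (insert A S) B"
      using IH[of m "insert A S" B E] impR fS NS fE Fr1 cond_insert[OF cd] E0 by auto
    then show ?thesis using impR(2) U_imp by simp
  next
    case (allR x A m)
    have cE: "cs S \<inter> E = {}" using cd allR(3) unfolding cond_def by auto
    have nR: "AllL \<notin> R" "ImpR \<notin> R" using cd allR(3) unfolding cond_def by auto
    have Fr1: "Fr G (insert x E) S (inst_fm 0 (Fn x []) A)" unfolding Fr_def
    proof (intro allI impI)
      fix Y assume Y: "finite Y" "cs Y \<inter> insert x E = {}" "U (S \<union> Y) (inst_fm 0 (Fn x []) A)"
      have "U (S \<union> Y) (All A)" using U_all[OF _ allR(5) Y(3)] allR(4) Y(2) by auto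
      then show "U (S \<union> Y) G" using FrC Y allR(2) unfolding Fr_def by auto
    qed
    have cd1: "cond R (insert x E) S" using cE nR allR(4) unfolding cond_def by auto
    have "U S (inst_fm 0 (Fn x []) A)"
      using IH[of m S "inst_fm 0 (Fn x []) A" "insert x E"] allR fS NS fE Fr1 cd1 by auto
    then show ?thesis using allR U_all by simp
  qed
qed

lemma main13: "Der False R n S G \<Longrightarrow> finite S \<Longrightarrow> Imp G Bot \<in> S \<Longrightarrow>
   AllR \<notin> R \<or> (AllL \<notin> R \<and> ImpR \<notin> R) \<Longrightarrow> U S G"
  by (rule T13[of R n S G G "{}"]) (auto simp: cond_def Fr_triv)

section \<open>Case 2: inversion\<close>

lemma inv_and: "Der u R n S C \<Longrightarrow> u = False \<Longrightarrow> C = And A B \<Longrightarrow> Der False R n S A \<and> Der False R n S B"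
proof (induct rule: Der.induct)
  case (exL R u C A' S x n)
  then show ?case by (auto intro: Der.exL)
qed (auto intro: Der.intros Der_Suc simp: ab_def is_atomic_def)

lemma inv_or_noOrL: "Der u R n S C \<Longrightarrow> u = False \<Longrightarrow> C = Or A B \<Longrightarrow> OrL \<notin> R \<Longrightarrow>
   Der False R n S A \<or> Der False R n S B"
proof (induct rule: Der.induct)
  case (exL R u C A' S x n)
  then show ?case by (auto intro: Der.exL)
qed (auto intro: Der.intros Der_Suc simp: ab_def is_atomic_def)

lemma inv_or_noOrR: "Der u R n S C \<Longrightarrow> u = False \<Longrightarrow> C = Or A B \<Longrightarrow> OrR \<notin> R \<Longrightarrow> Der False R n S A"
proof (induct rule: Der.induct)
  case (exL R u C A' S x n)
  then show ?case by (auto intro: Der.exL)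
qed (auto intro: Der.intros Der_Suc simp: ab_def is_atomic_def)

lemma inv_ex_chain: "Der u R n S C \<Longrightarrow> u = False \<Longrightarrow> C = Ex A \<Longrightarrow> OrL \<notin> R \<Longrightarrow> ExL \<notin> R \<Longrightarrow>
   \<exists>t. closed_tm 0 t \<and> Der False R n S (inst_fm 0 t A)"
proof (induct rule: Der.induct)
  case (botR R u C n S)
  then show ?case by (intro exI[of _ "Fn 0 []"]) (auto intro: Der.botR)
qed (auto intro: Der.intros Der_Suc simp: ab_def is_atomic_def)

lemma inv_imp: "Der u R n S C \<Longrightarrow> u = False \<Longrightarrow> C = Imp A B \<Longrightarrow> finite S \<Longrightarrow> Der False R n (insert A S) B"
proof (induct rule: Der.induct)
  case (botR R u C n S)
  then show ?case using Der_weak[of False R n S Bot "insert A S"] by (auto intro: Der.botR)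
next
  case (andL1 R u C A' B' S n)
  then show ?case by (auto intro!: Der.andL1[of _ _ _ A' B'] simp: insert_commute)
next
  case (andL2 R u C A' B' S n)
  then show ?case by (auto intro!: Der.andL2[of _ _ _ A' B'] simp: insert_commute)
next
  case (orL R u C A' B' S n)
  then show ?case by (auto intro!: Der.orL[of _ _ _ A' B'] simp: insert_commute)
next
  case (impL R u C A' B' S n)
  then show ?case using Der_weak[of False R n S A' "insert A S"]
    by (auto intro!: Der.impL[of _ _ _ A' B'] simp: insert_commute)
next
  case (allL R u C A' S t n)
  then show ?case by (auto intro!: Der.allL[of _ _ _ A' _ t] simp: insert_commute)
next
  case (exL R u C A' S x n)
  then show ?case by (auto intro!: Der.exL[of _ _ _ A' _ x] simp: insert_commute)
next
  case (impR R u n A' S B')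
  then show ?case by (auto intro: Der_Suc)
qed (auto simp: ab_def is_atomic_def)

lemma ren_single_set: "x \<notin> cs S \<Longrightarrow> ren_fm (id(x := y)) ` S = S"
  using ren_upd_set[of x S id y] by simp

lemma inv_all: "Der False R n S (All A) \<Longrightarrow> finite S \<Longrightarrow> x \<notin> cs S \<Longrightarrow> x \<notin> consts_fm A \<Longrightarrow>
   Der False R n S (inst_fm 0 (Fn x []) A)"
proof (induct n arbitrary: S x rule: less_induct)
  case (less n)
  note IH = less(1)
  have fS: "finite S" and xS: "x \<notin> cs S" and xA: "x \<notin> consts_fm A" using less by auto
  from less(2) show ?case
  proof (cases rule: Der.cases)
    case (botR m) then show ?thesis by (auto intro: Der.botR)
  next
    case (andL1 A' B' m)
    have "Der False R m (insert A' S) (inst_fm 0 (Fn x []) A)"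
      using IH[of m "insert A' S" x] andL1 fS xS xA cs_mono[OF andL1(4)] by auto
    then show ?thesis using andL1 by (auto intro: Der.andL1)
  next
    case (andL2 A' B' m)
    have "Der False R m (insert B' S) (inst_fm 0 (Fn x []) A)"
      using IH[of m "insert B' S" x] andL2 fS xS xA cs_mono[OF andL2(4)] by auto
    then show ?thesis using andL2 by (auto intro: Der.andL2)
  next
    case (orL A' B' m)
    have "Der False R m (insert A' S) (inst_fm 0 (Fn x []) A)"
      using IH[of m "insert A' S" x] orL fS xS xA cs_mono[OF orL(4)] by auto
    moreover have "Der False R m (insert B' S) (inst_fm 0 (Fn x []) A)"
      using IH[of m "insert B' S" x] orL fS xS xA cs_mono[OF orL(4)] by auto
    ultimately show ?thesis using orL by (auto intro: Der.orL)
  next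
    case (impL A' B' m)
    have "Der False R m (insert B' S) (inst_fm 0 (Fn x []) A)"
      using IH[of m "insert B' S" x] impL fS xS xA cs_mono[OF impL(4)] by auto
    then show ?thesis using impL by (auto intro: Der.impL)
  next
    case (allL A' t m)
    have fin: "finite (cs S \<union> {x})" using fS by simp
    obtain y where y: "y \<notin> cs S \<union> {x}" using fresh_ex[OF fin] by blast
    let ?\<sigma> = "id(x := y)"
    have xA': "x \<notin> consts_fm A'" using xS cs_mono[OF allL(4)] by auto
    have e1: "ren_fm ?\<sigma> ` insert (inst_fm 0 t A') S = insert (inst_fm 0 (ren_tm ?\<sigma> t) A') S"
      using ren_single_set[OF xS, of y] ren_inst_fm[of ?\<sigma> 0 t A'] ren_upd_fm[OF xA', of id y] by simp
    have e2: "ren_fm ?\<sigma> (All A) = All A" using ren_upd_fm[of x "All A" id y] xA by simp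
    have sub: "ren_fm ?\<sigma> ` insert (inst_fm 0 t A') S \<subseteq> insert (inst_fm 0 (ren_tm ?\<sigma> t) A') S"
      using e1 by (rule equalityD1)
    have d: "Der False R m (insert (inst_fm 0 (ren_tm ?\<sigma> t) A') S) (All A)"
      using Der_ren[OF allL(6) sub] e2 fS by simp
    have xt: "x \<notin> consts_tm (ren_tm ?\<sigma> t)" using y by (auto simp: consts_ren_tm)
    have "x \<notin> cs (insert (inst_fm 0 (ren_tm ?\<sigma> t) A') S)"
      using consts_inst_fm[of 0 "ren_tm ?\<sigma> t" A'] xt xA' xS by auto
    then have "Der False R m (insert (inst_fm 0 (ren_tm ?\<sigma> t) A') S) (inst_fm 0 (Fn x []) A)"
      using IH[of m _ x] d allL fS xA by auto
    then show ?thesis using allL closed_ren_tm[OF allL(5)] by (auto intro: Der.allL)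
  next
    case (exL A' z m)
    have fin: "finite (cs S \<union> {x} \<union> consts_fm A)" using fS by simp
    obtain y where y: "y \<notin> cs S \<union> {x} \<union> consts_fm A" using fresh_ex[OF fin] by blast
    have zA': "z \<notin> consts_fm A'" using exL(5) cs_mono[OF exL(4)] by auto
    have d: "Der False R m (insert (inst_fm 0 (Fn y []) A') S) (All A)"
      by (rule Der_rename[OF exL(7) exL(5) zA' exL(6) fS])
    have xA': "x \<notin> consts_fm A'" using xS cs_mono[OF exL(4)] by auto
    have "x \<notin> cs (insert (inst_fm 0 (Fn y []) A') S)"
      using consts_inst_x[of y A'] xA' xS y by auto
    then have "Der False R m (insert (inst_fm 0 (Fn y []) A') S) (inst_fm 0 (Fn x []) A)"
      using IH[of m _ x] d exL fS xA by auto
    moreover have "y \<notin> consts_fm (inst_fm 0 (Fn x []) A)" using consts_inst_x[of x A] y by auto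
    ultimately show ?thesis using exL y by (auto intro: Der.exL)
  next
    case (allR z m)
    let ?\<sigma> = "id(z := x)"
    have "Der False R m S (ren_fm ?\<sigma> (inst_fm 0 (Fn z []) A))"
      using Der_ren[OF allR(5), of ?\<sigma> S] ren_single_set[OF allR(3), of x] fS by simp
    then have "Der False R m S (inst_fm 0 (Fn x []) A)"
      using ren_inst_upd[OF allR(4), of id x] by simp
    then show ?thesis using allR by (auto intro: Der_Suc)
  qed (auto simp: ab_def is_atomic_def)
qed

lemma inv_ex_noExR: "Der False R n S (Ex A) \<Longrightarrow> finite S \<Longrightarrow> ExR \<notin> R \<Longrightarrow> closed_tm 0 t \<Longrightarrow>
   Der False R n S (inst_fm 0 t A)"
proof (induct n arbitrary: S rule: less_induct)
  case (less n)
  note IH = less(1)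
  have fS: "finite S" using less by auto
  from less(2) show ?case
  proof (cases rule: Der.cases)
    case (botR m) then show ?thesis by (auto intro: Der.botR)
  next
    case (andL1 A' B' m)
    then show ?thesis using IH[of m "insert A' S"] fS less by (auto intro: Der.andL1)
  next
    case (andL2 A' B' m)
    then show ?thesis using IH[of m "insert B' S"] fS less by (auto intro: Der.andL2)
  next
    case (orL A' B' m)
    then show ?thesis using IH[of m "insert A' S"] IH[of m "insert B' S"] fS less by (auto intro: Der.orL)
  next
    case (impL A' B' m)
    then show ?thesis using IH[of m "insert B' S"] fS less by (auto intro: Der.impL)
  next
    case (allL A' t' m)
    then show ?thesis using IH[of m "insert (inst_fm 0 t' A') S"] fS less by (auto intro: Der.allL)
  next
    case (exL A' z m)
    have fin: "finite (cs S \<union> consts_fm A \<union> consts_tm t)" using fS by simp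
    obtain y where y: "y \<notin> cs S \<union> consts_fm A \<union> consts_tm t" using fresh_ex[OF fin] by blast
    have zA': "z \<notin> consts_fm A'" using exL(5) cs_mono[OF exL(4)] by auto
    have d: "Der False R m (insert (inst_fm 0 (Fn y []) A') S) (Ex A)"
      by (rule Der_rename[OF exL(7) exL(5) zA' exL(6) fS])
    then have "Der False R m (insert (inst_fm 0 (Fn y []) A') S) (inst_fm 0 t A)"
      using IH[of m] exL fS less by auto
    moreover have "y \<notin> consts_fm (inst_fm 0 t A)" using consts_inst_fm[of 0 t A] y by auto
    ultimately show ?thesis using exL y by (auto intro: Der.exL)
  qed (use less in \<open>auto simp: ab_def is_atomic_def\<close>)
qed

definition cond2 :: "rule set \<Rightarrow> bool" where
  "cond2 R = ((OrR \<notin> R \<or> OrL \<notin> R) \<and> (ExR \<notin> R \<or> (OrL \<notin> R \<and> ExL \<notin> R)))"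

lemma T2: "Der False R n S C \<Longrightarrow> finite S \<Longrightarrow> cond2 R \<Longrightarrow> U S C"
proof (induct n arbitrary: S C rule: less_induct)
  case (less n)
  note IH = less(1)
  have c2: "cond2 R" using less by simp
  show ?case using less(2,3)
  proof (induct "fsize C" arbitrary: C S rule: less_induct)
    case less2: less
    note IH2 = less2(1)
    have fS: "finite S" using less2 by simp
    show ?case
    proof (cases "ab C")
      case True
      from less2(2) show ?thesis
      proof (cases rule: Der.cases)
        case axT then show ?thesis by (simp add: U_top)
      next
        case ax then show ?thesis by (simp add: U_ax)
      next
        case (botR m) then show ?thesis using IH[of m S Bot] fS c2 True by (auto intro: U_botR)
      next
        case (andL1 A' B' m) then show ?thesis using IH[of m "insert A' S" C] fS c2 True by (auto intro: U_andL1)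
      next
        case (andL2 A' B' m) then show ?thesis using IH[of m "insert B' S" C] fS c2 True by (auto intro: U_andL2)
      next
        case (orL A' B' m) then show ?thesis using IH[of m "insert A' S" C] IH[of m "insert B' S" C] fS c2 True
          by (auto intro: U_orL)
      next
        case (impL A' B' m) then show ?thesis using IH[of m S A'] IH[of m "insert B' S" C] fS c2 True
          by (auto intro: U_impL)
      next
        case (allL A' t m) then show ?thesis using IH[of m "insert (inst_fm 0 t A') S" C] fS c2 True
          by (auto intro: U_allL)
      next
        case (exL A' x m) then show ?thesis using IH[of m "insert (inst_fm 0 (Fn x []) A') S" C] fS c2 True
          by (auto intro: U_exL)
      qed (use True in \<open>auto simp: ab_def is_atomic_def\<close>)
    next
      case False
      show ?thesis
      proof (cases C)
        case (Atom p ts) then show ?thesis using False by (simp add: ab_def is_atomic_def)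
      next
        case Bot then show ?thesis using False by (simp add: ab_def)
      next
        case Top then show ?thesis by (simp add: U_top)
      next
        case (And A B)
        have "Der False R n S A \<and> Der False R n S B" using inv_and less2(2) And by blast
        then show ?thesis using IH2[of A S] IH2[of B S] And fS by (auto intro: U_and)
      next
        case (Imp A B)
        have "Der False R n (insert A S) B" using inv_imp less2(2) Imp fS by blast
        then show ?thesis using IH2[of B "insert A S"] Imp fS by (auto intro: U_imp)
      next
        case (All A)
        have fin: "finite (cs S \<union> consts_fm A)" using fS by simp
        obtain x where x: "x \<notin> cs S \<union> consts_fm A" using fresh_ex[OF fin] by blast
        have "Der False R n S (inst_fm 0 (Fn x []) A)" using inv_all less2(2) All fS x by blast
        then show ?thesis using IH2[of "inst_fm 0 (Fn x []) A" S] All fS x by (auto intro: U_all)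
      next
        case (Or A B)
        show ?thesis
        proof (cases "OrL \<in> R")
          case False
          then have "Der False R n S A \<or> Der False R n S B" using inv_or_noOrL less2(2) Or by blast
          then show ?thesis using IH2[of A S] IH2[of B S] Or fS by (auto intro: U_or1 U_or2)
        next
          case True
          then have "OrR \<notin> R" using c2 unfolding cond2_def by blast
          then have "Der False R n S A" using inv_or_noOrR less2(2) Or by blast
          then show ?thesis using IH2[of A S] Or fS by (auto intro: U_or1)
        qed
      next
        case (Ex A)
        show ?thesis
        proof (cases "ExR \<in> R")
          case False
          then have "Der False R n S (inst_fm 0 (Fn 0 []) A)" using inv_ex_noExR less2(2) Ex fS by fastforce
          then show ?thesis using IH2[of "inst_fm 0 (Fn 0 []) A" S] Ex fS by (auto intro: U_ex[of "Fn 0 []"])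
        next
          case True
          then have "OrL \<notin> R" "ExL \<notin> R" using c2 unfolding cond2_def by auto
          then obtain t where "closed_tm 0 t" "Der False R n S (inst_fm 0 t A)"
            using inv_ex_chain less2(2) Ex by blast
          then show ?thesis using IH2[of "inst_fm 0 t A" S] Ex fS by (auto intro: U_ex)
        qed
      qed
    qed
  qed
qed

definition sizes :: "ptree \<Rightarrow> bool" where "sizes p = (\<forall>s\<in>all_seqs p. size (snd s) = 1)"

lemma consts_seq_eq: "consts_seq (\<Delta>, \<Theta>) = cs (set_mset \<Delta>) \<union> cs (set_mset \<Theta>)"
  by (simp add: consts_seq_def cs_def)

lemma intro_ok_ab: "intro_ok r C \<Longrightarrow> r \<notin> {AndR, OrR, ImpR, AllR, ExR} \<Longrightarrow> ab C"
  by (cases C) (auto simp: ab_def is_atomic_def)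

lemma ab_intro_ok: "ab C \<Longrightarrow> intro_ok r C"
  by (cases C) (auto simp: ab_def is_atomic_def)

lemma root_in_all_seqs: "root p \<in> all_seqs p"
  by (cases p) simp

lemma all_seqs_child: "q \<in> set ps \<Longrightarrow> all_seqs q \<subseteq> all_seqs (PT s r ps)"
  by auto

lemma uses_child: "q \<in> set ps \<Longrightarrow> {r. uses r q} \<subseteq> {r'. uses r' (PT s r ps)}"
  by auto

lemma uses_root: "r \<in> {r'. uses r' (PT s r ps)}"
  by simp

lemma size1: "size M = 1 \<Longrightarrow> \<exists>C. M = {#C#}"
  by (metis One_nat_def size_1_singleton_mset)

lemma Der_wl: "Der u R n S C \<Longrightarrow> S \<subseteq> S' \<Longrightarrow> finite S' \<Longrightarrow> n \<le> m \<Longrightarrow> Der u R m S' C"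
  by (rule Der_le[OF Der_weak])

lemma ptree_der: "cproof p \<Longrightarrow> sizes p \<Longrightarrow> (u \<longrightarrow> uniform_nodes p) \<Longrightarrow> root p = (\<Delta>, {#C#}) \<Longrightarrow>
   \<exists>n. Der u {r. uses r p} n (set_mset \<Delta>) C"
proof (induct p arbitrary: \<Delta> C)
  case (PT s r ps)
  let ?R = "{r'. uses r' (PT s r ps)}"
  have s: "s = (\<Delta>, {#C#})" using PT(5) by simp
  have rin: "rinst r (map root ps) s" using PT(2) by simp
  have ch: "\<exists>n. Der u ?R n (set_mset \<Delta>') C'" if q: "q \<in> set ps" "root q = (\<Delta>', {#C'#})" for q \<Delta>' C'
  proof -
    have "cproof q" using PT(2) q by simp
    moreover have "sizes q" using PT(3) q unfolding sizes_def by auto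
    moreover have "u \<longrightarrow> uniform_nodes q" using PT(4) q by auto
    ultimately obtain n where "Der u {r. uses r q} n (set_mset \<Delta>') C'" using PT(1)[OF q(1)] q(2) by blast
    then show ?thesis using Der_R[OF _ uses_child[OF q(1), of s r]] by blast
  qed
  have chsize: "size (snd (root q)) = 1" if "q \<in> set ps" for q
    using PT(3) that root_in_all_seqs[of q] unfolding sizes_def by auto
  have okC: "u \<longrightarrow> r \<noteq> Axiom \<longrightarrow> intro_ok r C" using PT(4) s by simp
  have rR: "r \<in> ?R" by simp
  show ?case
  proof (cases r)
    case Axiom
    then have "is_axiom s" using rin by simp
    then have "C = Top \<or> (C \<in># \<Delta> \<and> ab C)" using s unfolding is_axiom_def ab_def by auto
    then show ?thesis by (metis Der.axT Der.ax)
  next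
    case ContrL
    then obtain B \<Gamma> \<Delta>0 where e: "map root ps = [(add_mset B (add_mset B \<Gamma>), \<Delta>0)]" "s = (add_mset B \<Gamma>, \<Delta>0)"
      using rin by auto
    then obtain q where q: "ps = [q]" "root q = (add_mset B (add_mset B \<Gamma>), \<Delta>0)" by auto
    have "\<Delta>0 = {#C#}" "\<Delta> = add_mset B \<Gamma>" using e s by auto
    then obtain n where "Der u ?R n (set_mset (add_mset B \<Delta>)) C" using ch[of q] q by auto
    then show ?thesis using \<open>\<Delta> = add_mset B \<Gamma>\<close> by (auto simp: insert_absorb)
  next
    case ContrR
    then obtain B \<Gamma> \<Delta>0 where e: "map root ps = [(\<Gamma>, add_mset B (add_mset B \<Delta>0))]" "s = (\<Gamma>, add_mset B \<Delta>0)"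
      using rin by auto
    then obtain q where q: "ps = [q]" "root q = (\<Gamma>, add_mset B (add_mset B \<Delta>0))" by auto
    have "\<Delta>0 = {#}" using e s by (auto simp: add_mset_eq_single)
    then show ?thesis using chsize[of q] q by simp
  next
    case BotR
    then obtain D \<Gamma> \<Delta>0 where e: "map root ps = [(\<Gamma>, add_mset Bot \<Delta>0)]" "s = (\<Gamma>, add_mset D \<Delta>0)"
      using rin by auto
    then obtain q where q: "ps = [q]" "root q = (\<Gamma>, add_mset Bot \<Delta>0)" by auto
    have e2: "\<Delta>0 = {#}" "D = C" "\<Gamma> = \<Delta>" using e s by (auto simp: add_mset_eq_single)
    obtain n where "Der u ?R n (set_mset \<Delta>) Bot" using ch[of q] q e2 by auto
    moreover have "u \<longrightarrow> ab C" using okC BotR intro_ok_ab by auto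
    ultimately show ?thesis using rR BotR by (intro exI[of _ "Suc n"] Der.botR[of ?R u C n "set_mset \<Delta>"]) auto
  next
    case AndL
    then obtain B D \<Gamma> \<Delta>0 where e: "map root ps = [(add_mset B \<Gamma>, \<Delta>0)] \<or> map root ps = [(add_mset D \<Gamma>, \<Delta>0)]"
      "s = (add_mset (And B D) \<Gamma>, \<Delta>0)"
      using rin AndL by (simp only: rinst.simps) (elim exE conjE, rule that, assumption+)
    have e2: "\<Delta>0 = {#C#}" "\<Delta> = add_mset (And B D) \<Gamma>" using e s by auto
    have abC: "u \<longrightarrow> ab C" using okC AndL intro_ok_ab by auto
    from e(1) show ?thesis
    proof
      assume "map root ps = [(add_mset B \<Gamma>, \<Delta>0)]"
      then obtain q where q: "ps = [q]" "root q = (add_mset B \<Gamma>, \<Delta>0)" by auto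
      obtain n where "Der u ?R n (insert B (set_mset \<Gamma>)) C" using ch[of q] q e2 by auto
      then have "Der u ?R n (insert B (set_mset \<Delta>)) C" using e2 by (auto elim: Der_weak)
      then show ?thesis using e2 abC rR AndL by (intro exI[of _ "Suc n"] Der.andL1[of ?R u C B D]) auto
    next
      assume "map root ps = [(add_mset D \<Gamma>, \<Delta>0)]"
      then obtain q where q: "ps = [q]" "root q = (add_mset D \<Gamma>, \<Delta>0)" by auto
      obtain n where "Der u ?R n (insert D (set_mset \<Gamma>)) C" using ch[of q] q e2 by auto
      then have "Der u ?R n (insert D (set_mset \<Delta>)) C" using e2 by (auto elim: Der_weak)
      then show ?thesis using e2 abC rR AndL by (intro exI[of _ "Suc n"] Der.andL2[of ?R u C B D]) auto
    qed
  next
    case OrL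
    then obtain B D \<Gamma> \<Delta>0 where e: "map root ps = [(add_mset B \<Gamma>, \<Delta>0), (add_mset D \<Gamma>, \<Delta>0)]"
      "s = (add_mset (Or B D) \<Gamma>, \<Delta>0)"
      using rin by auto
    then obtain q1 q2 where q: "ps = [q1, q2]" "root q1 = (add_mset B \<Gamma>, \<Delta>0)" "root q2 = (add_mset D \<Gamma>, \<Delta>0)" by auto
    have e2: "\<Delta>0 = {#C#}" "\<Delta> = add_mset (Or B D) \<Gamma>" using e s by auto
    have abC: "u \<longrightarrow> ab C" using okC OrL intro_ok_ab by auto
    obtain n1 where "Der u ?R n1 (insert B (set_mset \<Gamma>)) C" using ch[of q1] q e2 by auto
    then have d1: "Der u ?R (max n1 n2) (insert B (set_mset \<Delta>)) C" for n2 by (rule Der_wl) (use e2 in auto)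
    obtain n2 where "Der u ?R n2 (insert D (set_mset \<Gamma>)) C" using ch[of q2] q e2 by auto
    then have d2: "Der u ?R (max n1 n2) (insert D (set_mset \<Delta>)) C" by (rule Der_wl) (use e2 in auto)
    show ?thesis using d1[of n2] d2 e2 abC rR OrL by (intro exI[of _ "Suc (max n1 n2)"] Der.orL[of ?R u C B D "set_mset \<Delta>" "max n1 n2"]) auto
  next
    case ImpL
    then obtain B D \<Gamma> \<Delta>0 \<Theta> where e: "map root ps = [(\<Gamma>, add_mset B \<Delta>0), (add_mset D \<Gamma>, \<Theta>)]"
      "s = (add_mset (Imp B D) \<Gamma>, \<Delta>0 + \<Theta>)"
      using rin by auto
    then obtain q1 q2 where q: "ps = [q1, q2]" "root q1 = (\<Gamma>, add_mset B \<Delta>0)" "root q2 = (add_mset D \<Gamma>, \<Theta>)" by auto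
    have "size (add_mset B \<Delta>0) = 1" using chsize[of q1] q by simp
    then have d0: "\<Delta>0 = {#}" by simp
    have e2: "\<Theta> = {#C#}" "\<Delta> = add_mset (Imp B D) \<Gamma>" using e s d0 by auto
    have abC: "u \<longrightarrow> ab C" using okC ImpL intro_ok_ab by auto
    obtain n1 where "Der u ?R n1 (set_mset \<Gamma>) B" using ch[of q1] q d0 by auto
    then have d1: "Der u ?R (max n1 n2) (set_mset \<Delta>) B" for n2 by (rule Der_wl) (use e2 in auto)
    obtain n2 where "Der u ?R n2 (insert D (set_mset \<Gamma>)) C" using ch[of q2] q e2 by auto
    then have d2: "Der u ?R (max n1 n2) (insert D (set_mset \<Delta>)) C" by (rule Der_wl) (use e2 in auto)
    show ?thesis using d1[of n2] d2 e2 abC rR ImpL by (intro exI[of _ "Suc (max n1 n2)"] Der.impL[of ?R u C B D "set_mset \<Delta>" "max n1 n2"]) auto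
  next
    case AllL
    then obtain B t \<Gamma> \<Delta>0 where e: "closed_tm 0 t" "map root ps = [(add_mset (inst_fm 0 t B) \<Gamma>, \<Delta>0)]"
      "s = (add_mset (All B) \<Gamma>, \<Delta>0)"
      using rin by auto
    then obtain q where q: "ps = [q]" "root q = (add_mset (inst_fm 0 t B) \<Gamma>, \<Delta>0)" by auto
    have e2: "\<Delta>0 = {#C#}" "\<Delta> = add_mset (All B) \<Gamma>" using e s by auto
    have abC: "u \<longrightarrow> ab C" using okC AllL intro_ok_ab by auto
    obtain n where "Der u ?R n (insert (inst_fm 0 t B) (set_mset \<Gamma>)) C" using ch[of q] q e2 by auto
    then have "Der u ?R n (insert (inst_fm 0 t B) (set_mset \<Delta>)) C" using e2 by (auto elim: Der_weak)
    then show ?thesis using e e2 abC rR AllL by (intro exI[of _ "Suc n"] Der.allL[of ?R u C B "set_mset \<Delta>" t n]) auto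
  next
    case ExL
    then obtain B x \<Gamma> \<Delta>0 where e: "map root ps = [(add_mset (inst_fm 0 (Fn x []) B) \<Gamma>, \<Delta>0)]"
      "s = (add_mset (Ex B) \<Gamma>, \<Delta>0)" "x \<notin> consts_seq s"
      using rin by auto
    then obtain q where q: "ps = [q]" "root q = (add_mset (inst_fm 0 (Fn x []) B) \<Gamma>, \<Delta>0)" by auto
    have e2: "\<Delta>0 = {#C#}" "\<Delta> = add_mset (Ex B) \<Gamma>" using e s by auto
    have abC: "u \<longrightarrow> ab C" using okC ExL intro_ok_ab by auto
    have fr: "x \<notin> cs (set_mset \<Delta>)" "x \<notin> consts_fm C" using e(3) s by (auto simp: consts_seq_eq)
    obtain n where "Der u ?R n (insert (inst_fm 0 (Fn x []) B) (set_mset \<Gamma>)) C" using ch[of q] q e2 by auto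
    then have "Der u ?R n (insert (inst_fm 0 (Fn x []) B) (set_mset \<Delta>)) C" using e2 by (auto elim: Der_weak)
    then show ?thesis using e2 abC rR ExL fr by (intro exI[of _ "Suc n"] Der.exL[of ?R u C B "set_mset \<Delta>" x n]) auto
  next
    case AndR
    then obtain B D \<Gamma> \<Delta>0 where e: "map root ps = [(\<Gamma>, add_mset B \<Delta>0), (\<Gamma>, add_mset D \<Delta>0)]"
      "s = (\<Gamma>, add_mset (And B D) \<Delta>0)"
      using rin by auto
    then obtain q1 q2 where q: "ps = [q1, q2]" "root q1 = (\<Gamma>, add_mset B \<Delta>0)" "root q2 = (\<Gamma>, add_mset D \<Delta>0)" by auto
    have e2: "\<Delta>0 = {#}" "C = And B D" "\<Gamma> = \<Delta>" using e s by (auto simp: add_mset_eq_single)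
    obtain n1 where "Der u ?R n1 (set_mset \<Delta>) B" using ch[of q1] q e2 by auto
    then have d1: "Der u ?R (max n1 n2) (set_mset \<Delta>) B" for n2 by (rule Der_le) auto
    obtain n2 where "Der u ?R n2 (set_mset \<Delta>) D" using ch[of q2] q e2 by auto
    then have d2: "Der u ?R (max n1 n2) (set_mset \<Delta>) D" by (rule Der_le) auto
    show ?thesis unfolding e2(2) using d1[of n2] d2 rR AndR by (intro exI[of _ "Suc (max n1 n2)"] Der.andR[of ?R u "max n1 n2" "set_mset \<Delta>" B D]) auto
  next
    case OrR
    then obtain B D \<Gamma> \<Delta>0 where e: "map root ps = [(\<Gamma>, add_mset B \<Delta>0)] \<or> map root ps = [(\<Gamma>, add_mset D \<Delta>0)]"
      "s = (\<Gamma>, add_mset (Or B D) \<Delta>0)"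
      using rin OrR by (simp only: rinst.simps) (elim exE conjE, rule that, assumption+)
    have e2: "\<Delta>0 = {#}" "C = Or B D" "\<Gamma> = \<Delta>" using e s by (auto simp: add_mset_eq_single)
    from e(1) show ?thesis
    proof
      assume "map root ps = [(\<Gamma>, add_mset B \<Delta>0)]"
      then obtain q where q: "ps = [q]" "root q = (\<Gamma>, add_mset B \<Delta>0)" by auto
      obtain n where "Der u ?R n (set_mset \<Delta>) B" using ch[of q] q e2 by auto
      then show ?thesis unfolding e2(2) using rR OrR by (intro exI[of _ "Suc n"] Der.orR1[of ?R u n "set_mset \<Delta>" B D]) auto
    next
      assume "map root ps = [(\<Gamma>, add_mset D \<Delta>0)]"
      then obtain q where q: "ps = [q]" "root q = (\<Gamma>, add_mset D \<Delta>0)" by auto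
      obtain n where "Der u ?R n (set_mset \<Delta>) D" using ch[of q] q e2 by auto
      then show ?thesis unfolding e2(2) using rR OrR by (intro exI[of _ "Suc n"] Der.orR2[of ?R u n "set_mset \<Delta>" D B]) auto
    qed
  next
    case ImpR
    then obtain B D \<Gamma> \<Delta>0 where e: "map root ps = [(add_mset B \<Gamma>, add_mset D \<Delta>0)]"
      "s = (\<Gamma>, add_mset (Imp B D) \<Delta>0)"
      using rin by auto
    then obtain q where q: "ps = [q]" "root q = (add_mset B \<Gamma>, add_mset D \<Delta>0)" by auto
    have e2: "\<Delta>0 = {#}" "C = Imp B D" "\<Gamma> = \<Delta>" using e s by (auto simp: add_mset_eq_single)
    obtain n where "Der u ?R n (insert B (set_mset \<Delta>)) D" using ch[of q] q e2 by auto
    then show ?thesis unfolding e2(2) using rR ImpR by (intro exI[of _ "Suc n"] Der.impR[of ?R u n B "set_mset \<Delta>" D]) auto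
  next
    case AllR
    then obtain B x \<Gamma> \<Delta>0 where e: "map root ps = [(\<Gamma>, add_mset (inst_fm 0 (Fn x []) B) \<Delta>0)]"
      "s = (\<Gamma>, add_mset (All B) \<Delta>0)" "x \<notin> consts_seq s"
      using rin by auto
    then obtain q where q: "ps = [q]" "root q = (\<Gamma>, add_mset (inst_fm 0 (Fn x []) B) \<Delta>0)" by auto
    have e2: "\<Delta>0 = {#}" "C = All B" "\<Gamma> = \<Delta>" using e s by (auto simp: add_mset_eq_single)
    have fr: "x \<notin> cs (set_mset \<Delta>)" "x \<notin> consts_fm B" using e(3) s e2 by (auto simp: consts_seq_eq)
    obtain n where "Der u ?R n (set_mset \<Delta>) (inst_fm 0 (Fn x []) B)" using ch[of q] q e2 by auto
    then show ?thesis unfolding e2(2) using rR AllR fr by (intro exI[of _ "Suc n"] Der.allR[of ?R x "set_mset \<Delta>" B u n]) auto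
  next
    case ExR
    then obtain B t \<Gamma> \<Delta>0 where e: "closed_tm 0 t" "map root ps = [(\<Gamma>, add_mset (inst_fm 0 t B) \<Delta>0)]"
      "s = (\<Gamma>, add_mset (Ex B) \<Delta>0)"
      using rin by auto
    then obtain q where q: "ps = [q]" "root q = (\<Gamma>, add_mset (inst_fm 0 t B) \<Delta>0)" by auto
    have e2: "\<Delta>0 = {#}" "C = Ex B" "\<Gamma> = \<Delta>" using e s by (auto simp: add_mset_eq_single)
    obtain n where "Der u ?R n (set_mset \<Delta>) (inst_fm 0 t B)" using ch[of q] q e2 by auto
    then show ?thesis unfolding e2(2) using e rR ExR by (intro exI[of _ "Suc n"] Der.exR[of ?R t u n "set_mset \<Delta>" B]) auto
  qed
qed


definition good :: "ptree \<Rightarrow> fm multiset \<Rightarrow> fm \<Rightarrow> bool" where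
  "good q \<Delta> C = (cproof q \<and> sizes q \<and> uniform_nodes q \<and> root q = (\<Delta>, {#C#}))"

lemma mk_node: "rinst r (map root ps) (\<Delta>, {#C#}) \<Longrightarrow> (\<forall>q\<in>set ps. cproof q \<and> sizes q \<and> uniform_nodes q) \<Longrightarrow>
  (r \<noteq> Axiom \<longrightarrow> intro_ok r C) \<Longrightarrow> good (PT (\<Delta>, {#C#}) r ps) \<Delta> C"
  unfolding good_def sizes_def by auto

lemma good_D: "good q \<Delta> C \<Longrightarrow> cproof q \<and> sizes q \<and> uniform_nodes q"
  unfolding good_def by auto

lemma good_root: "good q \<Delta> C \<Longrightarrow> root q = (\<Delta>, {#C#})"
  unfolding good_def by auto

lemma contr_wrap: "X \<in># \<Delta> \<Longrightarrow> good q (add_mset X \<Delta>) C \<Longrightarrow> ab C \<Longrightarrow> \<exists>q'. good q' \<Delta> C"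
proof -
  assume a: "X \<in># \<Delta>" "good q (add_mset X \<Delta>) C" "ab C"
  have e: "add_mset X (\<Delta> - {#X#}) = \<Delta>" using a(1) by simp
  have "rinst ContrL [(add_mset X \<Delta>, {#C#})] (\<Delta>, {#C#})"
    using e by (simp only: rinst.simps) (metis)
  then have "good (PT (\<Delta>, {#C#}) ContrL [q]) \<Delta> C"
    using a good_D[OF a(2)] good_root[OF a(2)] ab_intro_ok by (intro mk_node) auto
  then show ?thesis by blast
qed

lemma der_ptree: "Der u R n S C \<Longrightarrow> u = True \<Longrightarrow> set_mset \<Delta> = S \<Longrightarrow> \<exists>q. good q \<Delta> C"
proof (induct arbitrary: \<Delta> rule: Der.induct)
  case (axT u R n S)
  have "rinst Axiom [] (\<Delta>, {#Top#})" by (simp add: is_axiom_def)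
  then show ?case using mk_node[of Axiom "[]" \<Delta> Top] by auto
next
  case (ax C S u R n)
  have "rinst Axiom [] (\<Delta>, {#C#})" using ax by (auto simp: is_axiom_def ab_def)
  then show ?case using mk_node[of Axiom "[]" \<Delta> C] by auto
next
  case (botR R u C n S)
  obtain q where q: "good q \<Delta> Bot" using botR by auto
  have "rinst BotR [(\<Delta>, {#Bot#})] (\<Delta>, {#C#})" by auto
  then have "good (PT (\<Delta>, {#C#}) BotR [q]) \<Delta> C"
    using good_D[OF q] good_root[OF q] botR ab_intro_ok by (intro mk_node) auto
  then show ?case by blast
next
  case (andL1 R u C A B S n)
  obtain q where q: "good q (add_mset A \<Delta>) C" using andL1.hyps(5)[of "add_mset A \<Delta>"] andL1.prems by auto
  have "rinst AndL [(add_mset A \<Delta>, {#C#})] (add_mset (And A B) \<Delta>, {#C#})" by (simp only: rinst.simps) blast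
  then have "good (PT (add_mset (And A B) \<Delta>, {#C#}) AndL [q]) (add_mset (And A B) \<Delta>) C"
    using good_D[OF q] good_root[OF q] andL1 ab_intro_ok by (intro mk_node) auto
  then show ?case using contr_wrap[of "And A B" \<Delta>] andL1 by auto
next
  case (andL2 R u C A B S n)
  obtain q where q: "good q (add_mset B \<Delta>) C" using andL2.hyps(5)[of "add_mset B \<Delta>"] andL2.prems by auto
  have "rinst AndL [(add_mset B \<Delta>, {#C#})] (add_mset (And A B) \<Delta>, {#C#})" by (simp only: rinst.simps) blast
  then have "good (PT (add_mset (And A B) \<Delta>, {#C#}) AndL [q]) (add_mset (And A B) \<Delta>) C"
    using good_D[OF q] good_root[OF q] andL2 ab_intro_ok by (intro mk_node) auto
  then show ?case using contr_wrap[of "And A B" \<Delta>] andL2 by auto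
next
  case (orL R u C A B S n)
  obtain q1 where q1: "good q1 (add_mset A \<Delta>) C" using orL.hyps(5)[of "add_mset A \<Delta>"] orL.prems by auto
  obtain q2 where q2: "good q2 (add_mset B \<Delta>) C" using orL.hyps(7)[of "add_mset B \<Delta>"] orL.prems by auto
  have "rinst OrL [(add_mset A \<Delta>, {#C#}), (add_mset B \<Delta>, {#C#})] (add_mset (Or A B) \<Delta>, {#C#})" by auto
  then have "good (PT (add_mset (Or A B) \<Delta>, {#C#}) OrL [q1, q2]) (add_mset (Or A B) \<Delta>) C"
    using good_D[OF q1] good_root[OF q1] good_D[OF q2] good_root[OF q2] orL ab_intro_ok by (intro mk_node) auto
  then show ?case using contr_wrap[of "Or A B" \<Delta>] orL by auto
next
  case (impL R u C A B S n)
  obtain q1 where q1: "good q1 \<Delta> A" using impL by auto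
  obtain q2 where q2: "good q2 (add_mset B \<Delta>) C" using impL.hyps(7)[of "add_mset B \<Delta>"] impL.prems by auto
  have "rinst ImpL [(\<Delta>, {#A#}), (add_mset B \<Delta>, {#C#})] (add_mset (Imp A B) \<Delta>, {#C#})"
    by (simp only: rinst.simps) (rule exI[of _ A], rule exI[of _ B], rule exI[of _ \<Delta>], rule exI[of _ "{#}"], rule exI[of _ "{#C#}"], simp)
  then have "good (PT (add_mset (Imp A B) \<Delta>, {#C#}) ImpL [q1, q2]) (add_mset (Imp A B) \<Delta>) C"
    using good_D[OF q1] good_root[OF q1] good_D[OF q2] good_root[OF q2] impL ab_intro_ok by (intro mk_node) auto
  then show ?case using contr_wrap[of "Imp A B" \<Delta>] impL by auto
next
  case (allL R u C A S t n)
  obtain q where q: "good q (add_mset (inst_fm 0 t A) \<Delta>) C" using allL.hyps(6)[of "add_mset (inst_fm 0 t A) \<Delta>"] allL.prems by auto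
  have "rinst AllL [(add_mset (inst_fm 0 t A) \<Delta>, {#C#})] (add_mset (All A) \<Delta>, {#C#})" using allL by auto
  then have "good (PT (add_mset (All A) \<Delta>, {#C#}) AllL [q]) (add_mset (All A) \<Delta>) C"
    using good_D[OF q] good_root[OF q] allL ab_intro_ok by (intro mk_node) auto
  then show ?case using contr_wrap[of "All A" \<Delta>] allL by auto
next
  case (exL R u C A S x n)
  obtain q where q: "good q (add_mset (inst_fm 0 (Fn x []) A) \<Delta>) C" using exL.hyps(7)[of "add_mset (inst_fm 0 (Fn x []) A) \<Delta>"] exL.prems by auto
  have "x \<notin> consts_seq (add_mset (Ex A) \<Delta>, {#C#})" using exL cs_mono[OF exL(3)] by (auto simp: consts_seq_eq)
  then have "rinst ExL [(add_mset (inst_fm 0 (Fn x []) A) \<Delta>, {#C#})] (add_mset (Ex A) \<Delta>, {#C#})" by auto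
  then have "good (PT (add_mset (Ex A) \<Delta>, {#C#}) ExL [q]) (add_mset (Ex A) \<Delta>) C"
    using good_D[OF q] good_root[OF q] exL ab_intro_ok by (intro mk_node) auto
  then show ?case using contr_wrap[of "Ex A" \<Delta>] exL by auto
next
  case (andR R u n S A B)
  obtain q1 where q1: "good q1 \<Delta> A" using andR by auto
  obtain q2 where q2: "good q2 \<Delta> B" using andR by auto
  have "rinst AndR [(\<Delta>, {#A#}), (\<Delta>, {#B#})] (\<Delta>, {#And A B#})" by auto
  then have "good (PT (\<Delta>, {#And A B#}) AndR [q1, q2]) \<Delta> (And A B)"
    using good_D[OF q1] good_root[OF q1] good_D[OF q2] good_root[OF q2] by (intro mk_node) auto
  then show ?case by blast
next
  case (orR1 R u n S A B)
  obtain q where q: "good q \<Delta> A" using orR1 by auto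
  have "rinst OrR [(\<Delta>, {#A#})] (\<Delta>, {#Or A B#})" by (simp only: rinst.simps) blast
  then have "good (PT (\<Delta>, {#Or A B#}) OrR [q]) \<Delta> (Or A B)"
    using good_D[OF q] good_root[OF q] by (intro mk_node) auto
  then show ?case by blast
next
  case (orR2 R u n S B A)
  obtain q where q: "good q \<Delta> B" using orR2 by auto
  have "rinst OrR [(\<Delta>, {#B#})] (\<Delta>, {#Or A B#})" by (simp only: rinst.simps) blast
  then have "good (PT (\<Delta>, {#Or A B#}) OrR [q]) \<Delta> (Or A B)"
    using good_D[OF q] good_root[OF q] by (intro mk_node) auto
  then show ?case by blast
next
  case (impR R u n A S B)
  obtain q where q: "good q (add_mset A \<Delta>) B" using impR.hyps(3)[of "add_mset A \<Delta>"] impR.prems by auto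
  have "rinst ImpR [(add_mset A \<Delta>, {#B#})] (\<Delta>, {#Imp A B#})" by auto
  then have "good (PT (\<Delta>, {#Imp A B#}) ImpR [q]) \<Delta> (Imp A B)"
    using good_D[OF q] good_root[OF q] by (intro mk_node) auto
  then show ?case by blast
next
  case (allR R x S A u n)
  obtain q where q: "good q \<Delta> (inst_fm 0 (Fn x []) A)" using allR by auto
  have "x \<notin> consts_seq (\<Delta>, {#All A#})" using allR by (auto simp: consts_seq_eq)
  then have "rinst AllR [(\<Delta>, {#inst_fm 0 (Fn x []) A#})] (\<Delta>, {#All A#})" by auto
  then have "good (PT (\<Delta>, {#All A#}) AllR [q]) \<Delta> (All A)"
    using good_D[OF q] good_root[OF q] by (intro mk_node) auto
  then show ?case by blast
next
  case (exR R t u n S A)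
  obtain q where q: "good q \<Delta> (inst_fm 0 t A)" using exR by auto
  have "rinst ExR [(\<Delta>, {#inst_fm 0 t A#})] (\<Delta>, {#Ex A#})" using exR by auto
  then have "good (PT (\<Delta>, {#Ex A#}) ExR [q]) \<Delta> (Ex A)"
    using good_D[OF q] good_root[OF q] by (intro mk_node) auto
  then show ?case by blast
qed

lemma part1:
  assumes "iproof p" "root p = goal_seq G \<Gamma>" "restricted p"
  shows "\<exists>q. uproof q \<and> root q = goal_seq G \<Gamma>"
proof -
  let ?R = "{r. uses r p}"
  let ?S = "set_mset (add_mset (Neg G) \<Gamma>)"
  have cp: "cproof p" and sz: "sizes p" using assms(1) unfolding iproof_def sizes_def by auto
  obtain n where d: "Der False ?R n ?S G"
    using ptree_der[OF cp sz, of False "add_mset (Neg G) \<Gamma>" G] assms(2) unfolding goal_seq_def by auto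
  have fin: "finite ?S" by simp
  have N: "Imp G Bot \<in> ?S" by (simp add: Neg_def)
  have "U ?S G"
  proof (cases "AllR \<notin> ?R \<or> (AllL \<notin> ?R \<and> ImpR \<notin> ?R)")
    case True
    then show ?thesis using main13[OF d fin N] by blast
  next
    case False
    then have "cond2 ?R" using assms(3) unfolding restricted_def cond2_def by auto
    then show ?thesis using T2[OF d fin] by blast
  qed
  then obtain m where "Der True UNIV m ?S G" unfolding U_def by blast
  then obtain q where q: "good q (add_mset (Neg G) \<Gamma>) G" using der_ptree by blast
  then show ?thesis unfolding good_def uproof_def iproof_def sizes_def goal_seq_def by auto
qed

lemma cAx: "is_axiom s \<Longrightarrow> cproof (PT s Axiom [])" by simp

lemma cAllR: "cproof q \<Longrightarrow> root q = (\<Gamma>, {#inst_fm 0 (Fn x []) B#}) \<Longrightarrow> x \<notin> consts_seq (\<Gamma>, {#All B#}) \<Longrightarrow>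
  cproof (PT (\<Gamma>, {#All B#}) AllR [q])"
  by (simp; blast?)

lemma cAllL: "cproof q \<Longrightarrow> root q = (add_mset (inst_fm 0 t B) \<Gamma>, \<Delta>) \<Longrightarrow> closed_tm 0 t \<Longrightarrow>
  cproof (PT (add_mset (All B) \<Gamma>, \<Delta>) AllL [q])"
  by (simp; blast?)

lemma cExL: "cproof q \<Longrightarrow> root q = (add_mset (inst_fm 0 (Fn x []) B) \<Gamma>, \<Delta>) \<Longrightarrow>
  x \<notin> consts_seq (add_mset (Ex B) \<Gamma>, \<Delta>) \<Longrightarrow> cproof (PT (add_mset (Ex B) \<Gamma>, \<Delta>) ExL [q])"
  by (simp; blast?)

lemma cExR: "cproof q \<Longrightarrow> root q = (\<Gamma>, {#inst_fm 0 t B#}) \<Longrightarrow> closed_tm 0 t \<Longrightarrow>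
  cproof (PT (\<Gamma>, {#Ex B#}) ExR [q])"
  by (simp; blast?)

lemma cImpR: "cproof q \<Longrightarrow> root q = (add_mset B \<Gamma>, {#D#}) \<Longrightarrow> cproof (PT (\<Gamma>, {#Imp B D#}) ImpR [q])"
  by (simp; blast?)

lemma cOrR: "cproof q \<Longrightarrow> root q = (\<Gamma>, {#B#}) \<or> root q = (\<Gamma>, {#D#}) \<Longrightarrow> cproof (PT (\<Gamma>, {#Or B D#}) OrR [q])"
  by (simp; blast?)

lemma cOrL: "cproof q1 \<Longrightarrow> cproof q2 \<Longrightarrow> root q1 = (add_mset B \<Gamma>, \<Delta>) \<Longrightarrow> root q2 = (add_mset D \<Gamma>, \<Delta>) \<Longrightarrow>
  cproof (PT (add_mset (Or B D) \<Gamma>, \<Delta>) OrL [q1, q2])"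
  by (simp; blast?)

lemmas cR = cAx cAllR cAllL cExL cExR cImpR cOrR cOrL

lemma no_uniform:
  assumes "\<And>n. Der True UNIV n (set_mset (add_mset (Neg G) \<Gamma>)) G \<Longrightarrow> False"
  shows "\<not> (\<exists>q. uproof q \<and> root q = goal_seq G \<Gamma>)"
proof
  assume "\<exists>q. uproof q \<and> root q = goal_seq G \<Gamma>"
  then obtain q where q: "cproof q" "sizes q" "uniform_nodes q" "root q = (add_mset (Neg G) \<Gamma>, {#G#})"
    unfolding uproof_def iproof_def sizes_def goal_seq_def by auto
  obtain n where "Der True {r. uses r q} n (set_mset (add_mset (Neg G) \<Gamma>)) G"
    using ptree_der[OF q(1,2), of True] q(3,4) by auto
  then show False using assms Der_R by blast
qed

abbreviation "Pa t \<equiv> Atom 0 [t]"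
abbreviation "Qa t \<equiv> Atom 1 [t]"
abbreviation "cc \<equiv> Fn 7 []"
definition "GA = All (Or (Pa (Bnd 0)) (Qa (Bnd 0)))"
definition "HA = All (Or (Qa (Bnd 0)) (Pa (Bnd 0)))"

definition "treeA =
  PT (add_mset (Neg GA) {#HA#}, {#GA#}) AllR [
   PT (add_mset HA {#Neg GA#}, {#Or (Pa cc) (Qa cc)#}) AllL [
    PT (add_mset (Or (Qa cc) (Pa cc)) {#Neg GA#}, {#Or (Pa cc) (Qa cc)#}) OrL [
     PT (add_mset (Qa cc) {#Neg GA#}, {#Or (Pa cc) (Qa cc)#}) OrR [PT (add_mset (Qa cc) {#Neg GA#}, {#Qa cc#}) Axiom []],
     PT (add_mset (Pa cc) {#Neg GA#}, {#Or (Pa cc) (Qa cc)#}) OrR [PT (add_mset (Pa cc) {#Neg GA#}, {#Pa cc#}) Axiom []]]]]"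

lemma treeA_cproof: "cproof treeA"
  unfolding treeA_def GA_def HA_def
  by (intro cR) (auto simp: GA_def HA_def Neg_def consts_seq_def is_axiom_def is_atomic_def add_mset_commute)

lemma treeA_props: "iproof treeA \<and> root treeA = goal_seq GA {#HA#} \<and> uses AllR treeA \<and> uses OrR treeA \<and> uses OrL treeA \<and> uses AllL treeA"
  using treeA_cproof unfolding iproof_def by (simp add: treeA_def goal_seq_def)

definition "ShA S = (\<forall>F\<in>S. F = Imp GA Bot \<or> F = HA \<or> (\<exists>t. F = Or (Qa t) (Pa t)) \<or> (\<exists>p ts. F = Atom p ts))"
definition "BadA S C = (ShA S \<and> (C = GA \<or> C = Bot \<or> (\<exists>t. C = Or (Pa t) (Qa t) \<and> Pa t \<notin> S \<and> Qa t \<notin> S)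
   \<or> (\<exists>t. C = Pa t \<and> C \<notin> S) \<or> (\<exists>t. C = Qa t \<and> C \<notin> S)))"

lemma noA: "Der u R n S C \<Longrightarrow> u = True \<Longrightarrow> BadA S C \<Longrightarrow> False"
proof (induct rule: Der.induct)
  case (orL R u C A B S n)
  then obtain t where "A = Qa t" "B = Pa t" unfolding BadA_def ShA_def by (auto simp: GA_def HA_def)
  then show ?case using orL unfolding BadA_def ShA_def by (auto simp: ab_def is_atomic_def)
next
  case (allL R u C A S t n)
  then have "A = Or (Qa (Bnd 0)) (Pa (Bnd 0))" unfolding BadA_def ShA_def by (auto simp: GA_def HA_def)
  then show ?case using allL unfolding BadA_def ShA_def by (auto simp: ab_def is_atomic_def)
next
  case (impL R u C A B S n)
  then have "A = GA" unfolding BadA_def ShA_def by (auto simp: GA_def HA_def)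
  then show ?case using impL unfolding BadA_def ShA_def by auto
next
  case (allR R x S A u n)
  then have "A = Or (Pa (Bnd 0)) (Qa (Bnd 0))" unfolding BadA_def by (auto simp: GA_def)
  moreover have "Pa (Fn x []) \<notin> S" "Qa (Fn x []) \<notin> S" using allR(2) cs_mono by fastforce+
  ultimately show ?case using allR unfolding BadA_def by auto
qed (auto simp: BadA_def ShA_def GA_def HA_def ab_def is_atomic_def)

lemma exA: "\<not> (\<exists>q. uproof q \<and> root q = goal_seq GA {#HA#})"
proof (rule no_uniform)
  fix n assume "Der True UNIV n (set_mset (add_mset (Neg GA) {#HA#})) GA"
  then show False by (rule noA) (auto simp: BadA_def ShA_def Neg_def)
qed


definition "GB = All (Imp (Or (Qa (Bnd 0)) (Pa (Bnd 0))) (Or (Pa (Bnd 0)) (Qa (Bnd 0))))"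

definition "treeB =
  PT ({#Neg GB#}, {#GB#}) AllR [
   PT ({#Neg GB#}, {#Imp (Or (Qa cc) (Pa cc)) (Or (Pa cc) (Qa cc))#}) ImpR [
    PT (add_mset (Or (Qa cc) (Pa cc)) {#Neg GB#}, {#Or (Pa cc) (Qa cc)#}) OrL [
     PT (add_mset (Qa cc) {#Neg GB#}, {#Or (Pa cc) (Qa cc)#}) OrR [PT (add_mset (Qa cc) {#Neg GB#}, {#Qa cc#}) Axiom []],
     PT (add_mset (Pa cc) {#Neg GB#}, {#Or (Pa cc) (Qa cc)#}) OrR [PT (add_mset (Pa cc) {#Neg GB#}, {#Pa cc#}) Axiom []]]]]"

lemma treeB_cproof: "cproof treeB"
  unfolding treeB_def GB_def
  by (intro cR) (auto simp: Neg_def consts_seq_def is_axiom_def is_atomic_def add_mset_commute)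

lemma treeB_props: "iproof treeB \<and> root treeB = goal_seq GB {#} \<and> uses AllR treeB \<and> uses OrR treeB \<and> uses OrL treeB \<and> uses ImpR treeB"
  using treeB_cproof unfolding iproof_def by (simp add: treeB_def goal_seq_def)

definition "ShB S = (\<forall>F\<in>S. F = Imp GB Bot \<or> (\<exists>t. F = Or (Qa t) (Pa t)) \<or> (\<exists>p ts. F = Atom p ts))"
definition "BadB S C = (ShB S \<and> (C = GB \<or> C = Bot
   \<or> (\<exists>t. C = Imp (Or (Qa t) (Pa t)) (Or (Pa t) (Qa t)) \<and> Pa t \<notin> S \<and> Qa t \<notin> S)
   \<or> (\<exists>t. C = Or (Pa t) (Qa t) \<and> Pa t \<notin> S \<and> Qa t \<notin> S)
   \<or> (\<exists>t. C = Pa t \<and> C \<notin> S) \<or> (\<exists>t. C = Qa t \<and> C \<notin> S)))"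

lemma noB: "Der u R n S C \<Longrightarrow> u = True \<Longrightarrow> BadB S C \<Longrightarrow> False"
proof (induct rule: Der.induct)
  case (orL R u C A B S n)
  then obtain t where "A = Qa t" "B = Pa t" unfolding BadB_def ShB_def by (auto simp: GB_def)
  then show ?case using orL unfolding BadB_def ShB_def by (auto simp: ab_def is_atomic_def)
next
  case (impL R u C A B S n)
  then have "A = GB" unfolding BadB_def ShB_def by (auto simp: GB_def)
  then show ?case using impL unfolding BadB_def ShB_def by auto
next
  case (impR R u n A S B)
  then show ?case unfolding BadB_def ShB_def by (auto simp: GB_def)
next
  case (allR R x S A u n)
  then have "A = Imp (Or (Qa (Bnd 0)) (Pa (Bnd 0))) (Or (Pa (Bnd 0)) (Qa (Bnd 0)))" unfolding BadB_def by (auto simp: GB_def)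
  moreover have "Pa (Fn x []) \<notin> S" "Qa (Fn x []) \<notin> S" using allR(2) cs_mono by fastforce+
  ultimately show ?case using allR unfolding BadB_def by auto
qed (auto simp: BadB_def ShB_def GB_def ab_def is_atomic_def)

lemma exB: "\<not> (\<exists>q. uproof q \<and> root q = goal_seq GB {#})"
proof (rule no_uniform)
  fix n assume "Der True UNIV n (set_mset (add_mset (Neg GB) {#})) GB"
  then show False by (rule noB) (auto simp: BadB_def ShB_def Neg_def)
qed

abbreviation "Ra s t \<equiv> Atom 2 [s, t]"
abbreviation "dd \<equiv> Fn 8 []"
definition "GC = All (Ex (Ra (Bnd 1) (Bnd 0)))"

definition "treeC =
  PT (add_mset (Neg GC) {#GC#}, {#GC#}) AllR [
   PT (add_mset GC {#Neg GC#}, {#Ex (Ra cc (Bnd 0))#}) AllL [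
    PT (add_mset (Ex (Ra cc (Bnd 0))) {#Neg GC#}, {#Ex (Ra cc (Bnd 0))#}) ExL [
     PT (add_mset (Ra cc dd) {#Neg GC#}, {#Ex (Ra cc (Bnd 0))#}) ExR [
      PT (add_mset (Ra cc dd) {#Neg GC#}, {#Ra cc dd#}) Axiom []]]]]"

lemma treeC_cproof: "cproof treeC"
  unfolding treeC_def GC_def
  by (intro cR) (auto simp: Neg_def consts_seq_def is_axiom_def is_atomic_def add_mset_commute)

lemma treeC_props: "iproof treeC \<and> root treeC = goal_seq GC {#GC#} \<and> uses AllR treeC \<and> uses ExR treeC \<and> uses ExL treeC \<and> uses AllL treeC"
  using treeC_cproof unfolding iproof_def by (simp add: treeC_def goal_seq_def)

definition "ShC S = (\<forall>F\<in>S. F = Imp GC Bot \<or> F = GC \<or> (\<exists>t. F = Ex (Ra t (Bnd 0))) \<or> (\<exists>p ts. F = Atom p ts))"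
definition "BadC S C = (ShC S \<and> (C = GC \<or> C = Bot
   \<or> (\<exists>x. C = Ex (Ra (Fn x []) (Bnd 0)) \<and> (\<forall>v. Ra (Fn x []) v \<notin> S))
   \<or> (is_atomic C \<and> C \<notin> S)))"

lemma noC: "Der u R n S C \<Longrightarrow> u = True \<Longrightarrow> BadC S C \<Longrightarrow> False"
proof (induct rule: Der.induct)
  case (impL R u C A B S n)
  then have "A = GC" unfolding BadC_def ShC_def by (auto simp: GC_def)
  then show ?case using impL unfolding BadC_def ShC_def by auto
next
  case (allL R u C A S t n)
  then have "A = Ex (Ra (Bnd 1) (Bnd 0))" unfolding BadC_def ShC_def by (auto simp: GC_def)
  then show ?case using allL unfolding BadC_def ShC_def by (auto simp: ab_def is_atomic_def)
next
  case (exL R u C A S x n)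
  then obtain t where A: "A = Ra t (Bnd 0)" unfolding BadC_def ShC_def by (auto simp: GC_def)
  have "C \<noteq> inst_fm 0 (Fn x []) A" using exL(5) A by auto
  then show ?case using exL A unfolding BadC_def ShC_def by (auto simp: ab_def is_atomic_def)
next
  case (allR R x S A u n)
  then have "A = Ex (Ra (Bnd 1) (Bnd 0))" unfolding BadC_def by (auto simp: GC_def is_atomic_def)
  moreover have "\<forall>v. Ra (Fn x []) v \<notin> S" using allR(2) cs_mono by fastforce
  ultimately show ?case using allR unfolding BadC_def by auto
next
  case (exR R t u n S A)
  then show ?case unfolding BadC_def by (auto simp: GC_def is_atomic_def)
qed (auto simp: BadC_def ShC_def GC_def ab_def is_atomic_def)

lemma exC: "\<not> (\<exists>q. uproof q \<and> root q = goal_seq GC {#GC#})"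
proof (rule no_uniform)
  fix n assume "Der True UNIV n (set_mset (add_mset (Neg GC) {#GC#})) GC"
  then show False by (rule noC) (auto simp: BadC_def ShC_def Neg_def)
qed


definition "GD = All (Imp (Ex (Ra (Bnd 1) (Bnd 0))) (Ex (Ra (Bnd 1) (Bnd 0))))"

definition "treeD =
  PT ({#Neg GD#}, {#GD#}) AllR [
   PT ({#Neg GD#}, {#Imp (Ex (Ra cc (Bnd 0))) (Ex (Ra cc (Bnd 0)))#}) ImpR [
    PT (add_mset (Ex (Ra cc (Bnd 0))) {#Neg GD#}, {#Ex (Ra cc (Bnd 0))#}) ExL [
     PT (add_mset (Ra cc dd) {#Neg GD#}, {#Ex (Ra cc (Bnd 0))#}) ExR [
      PT (add_mset (Ra cc dd) {#Neg GD#}, {#Ra cc dd#}) Axiom []]]]]"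

lemma treeD_cproof: "cproof treeD"
  unfolding treeD_def GD_def
  by (intro cR) (auto simp: Neg_def consts_seq_def is_axiom_def is_atomic_def add_mset_commute)

lemma treeD_props: "iproof treeD \<and> root treeD = goal_seq GD {#} \<and> uses AllR treeD \<and> uses ExR treeD \<and> uses ExL treeD \<and> uses ImpR treeD"
  using treeD_cproof unfolding iproof_def by (simp add: treeD_def goal_seq_def)

definition "ShD S = (\<forall>F\<in>S. F = Imp GD Bot \<or> (\<exists>t. F = Ex (Ra t (Bnd 0))) \<or> (\<exists>p ts. F = Atom p ts))"
definition "BadD S C = (ShD S \<and> (C = GD \<or> C = Bot
   \<or> (\<exists>x. C = Imp (Ex (Ra (Fn x []) (Bnd 0))) (Ex (Ra (Fn x []) (Bnd 0))) \<and> (\<forall>v. Ra (Fn x []) v \<notin> S))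
   \<or> (\<exists>x. C = Ex (Ra (Fn x []) (Bnd 0)) \<and> (\<forall>v. Ra (Fn x []) v \<notin> S))
   \<or> (is_atomic C \<and> C \<notin> S)))"

lemma noD: "Der u R n S C \<Longrightarrow> u = True \<Longrightarrow> BadD S C \<Longrightarrow> False"
proof (induct rule: Der.induct)
  case (impL R u C A B S n)
  then have "A = GD" unfolding BadD_def ShD_def by (auto simp: GD_def)
  then show ?case using impL unfolding BadD_def ShD_def by auto
next
  case (exL R u C A S x n)
  then obtain t where A: "A = Ra t (Bnd 0)" unfolding BadD_def ShD_def by (auto simp: GD_def)
  have "C \<noteq> inst_fm 0 (Fn x []) A" using exL(5) A by auto
  then show ?case using exL A unfolding BadD_def ShD_def by (auto simp: ab_def is_atomic_def)
next
  case (impR R u n A S B)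
  then show ?case unfolding BadD_def ShD_def by (auto simp: GD_def is_atomic_def)
next
  case (allR R x S A u n)
  then have "A = Imp (Ex (Ra (Bnd 1) (Bnd 0))) (Ex (Ra (Bnd 1) (Bnd 0)))" unfolding BadD_def by (auto simp: GD_def is_atomic_def)
  moreover have "\<forall>v. Ra (Fn x []) v \<notin> S" using allR(2) cs_mono by fastforce
  ultimately show ?case using allR unfolding BadD_def by auto
next
  case (exR R t u n S A)
  then show ?case unfolding BadD_def by (auto simp: GD_def is_atomic_def)
qed (auto simp: BadD_def ShD_def GD_def ab_def is_atomic_def)

lemma exD: "\<not> (\<exists>q. uproof q \<and> root q = goal_seq GD {#})"
proof (rule no_uniform)
  fix n assume "Der True UNIV n (set_mset (add_mset (Neg GD) {#})) GD"
  then show False by (rule noD) (auto simp: BadD_def ShD_def Neg_def)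
qed

abbreviation "kk \<equiv> Fn 5 []"
definition "HE = All (Or (Ra (Bnd 0) (Bnd 0)) (Ra (Bnd 0) kk))"

definition "treeE =
  PT (add_mset (Neg GC) {#HE#}, {#GC#}) AllR [
   PT (add_mset HE {#Neg GC#}, {#Ex (Ra cc (Bnd 0))#}) AllL [
    PT (add_mset (Or (Ra cc cc) (Ra cc kk)) {#Neg GC#}, {#Ex (Ra cc (Bnd 0))#}) OrL [
     PT (add_mset (Ra cc cc) {#Neg GC#}, {#Ex (Ra cc (Bnd 0))#}) ExR [
      PT (add_mset (Ra cc cc) {#Neg GC#}, {#Ra cc cc#}) Axiom []],
     PT (add_mset (Ra cc kk) {#Neg GC#}, {#Ex (Ra cc (Bnd 0))#}) ExR [
      PT (add_mset (Ra cc kk) {#Neg GC#}, {#Ra cc kk#}) Axiom []]]]]"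

lemma treeE_cproof: "cproof treeE"
  unfolding treeE_def GC_def HE_def
  by (intro cR) (auto simp: Neg_def consts_seq_def is_axiom_def is_atomic_def add_mset_commute)

lemma treeE_props: "iproof treeE \<and> root treeE = goal_seq GC {#HE#} \<and> uses AllR treeE \<and> uses ExR treeE \<and> uses OrL treeE \<and> uses AllL treeE"
  using treeE_cproof unfolding iproof_def by (simp add: treeE_def goal_seq_def)

definition "ShE S = (\<forall>F\<in>S. F = Imp GC Bot \<or> F = HE \<or> (\<exists>t. F = Or (Ra t t) (Ra t kk)) \<or> (\<exists>p ts. F = Atom p ts))"
definition "BadE S C = (HE \<in> S \<and> ShE S \<and> (C = GC \<or> C = Bot
   \<or> (\<exists>x. x \<noteq> 5 \<and> C = Ex (Ra (Fn x []) (Bnd 0)) \<and> (\<forall>v. Ra (Fn x []) v \<notin> S))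
   \<or> (\<exists>x v. x \<noteq> 5 \<and> C = Ra (Fn x []) v \<and> C \<notin> S)))"

lemma noE: "Der u R n S C \<Longrightarrow> u = True \<Longrightarrow> BadE S C \<Longrightarrow> False"
proof (induct rule: Der.induct)
  case (orL R u C A B S n)
  then obtain t where AB: "A = Ra t t" "B = Ra t kk" unfolding BadE_def ShE_def by (auto simp: GC_def HE_def)
  show ?case
  proof (cases "C = A")
    case True
    then have "C \<noteq> B" using orL AB unfolding BadE_def by (auto simp: GC_def)
    then show ?thesis using orL AB unfolding BadE_def ShE_def by (auto simp: ab_def is_atomic_def GC_def)
  next
    case False
    then show ?thesis using orL AB unfolding BadE_def ShE_def by (auto simp: ab_def is_atomic_def)
  qed
next
  case (allL R u C A S t n)
  then have "A = Or (Ra (Bnd 0) (Bnd 0)) (Ra (Bnd 0) kk)" unfolding BadE_def ShE_def by (auto simp: GC_def HE_def)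
  then show ?case using allL unfolding BadE_def ShE_def by (auto simp: ab_def is_atomic_def)
next
  case (impL R u C A B S n)
  then have "A = GC" unfolding BadE_def ShE_def by (auto simp: GC_def HE_def)
  then show ?case using impL unfolding BadE_def ShE_def by auto
next
  case (allR R x S A u n)
  then have "A = Ex (Ra (Bnd 1) (Bnd 0))" unfolding BadE_def by (auto simp: GC_def)
  moreover have "\<forall>v. Ra (Fn x []) v \<notin> S" using allR(2) cs_mono by fastforce
  moreover have "x \<noteq> 5" using allR(2) cs_mono[of HE S] allR(7) unfolding BadE_def by (auto simp: HE_def)
  ultimately show ?case using allR unfolding BadE_def by auto
next
  case (exR R t u n S A)
  then show ?case unfolding BadE_def by (auto simp: GC_def)
qed (auto simp: BadE_def ShE_def GC_def HE_def ab_def is_atomic_def)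

lemma exE: "\<not> (\<exists>q. uproof q \<and> root q = goal_seq GC {#HE#})"
proof (rule no_uniform)
  fix n assume "Der True UNIV n (set_mset (add_mset (Neg GC) {#HE#})) GC"
  then show False by (rule noE) (auto simp: BadE_def ShE_def Neg_def)
qed

definition "GF = All (Imp (Or (Ra (Bnd 0) (Bnd 0)) (Ra (Bnd 0) kk)) (Ex (Ra (Bnd 1) (Bnd 0))))"

definition "treeF =
  PT ({#Neg GF#}, {#GF#}) AllR [
   PT ({#Neg GF#}, {#Imp (Or (Ra cc cc) (Ra cc kk)) (Ex (Ra cc (Bnd 0)))#}) ImpR [
    PT (add_mset (Or (Ra cc cc) (Ra cc kk)) {#Neg GF#}, {#Ex (Ra cc (Bnd 0))#}) OrL [
     PT (add_mset (Ra cc cc) {#Neg GF#}, {#Ex (Ra cc (Bnd 0))#}) ExR [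
      PT (add_mset (Ra cc cc) {#Neg GF#}, {#Ra cc cc#}) Axiom []],
     PT (add_mset (Ra cc kk) {#Neg GF#}, {#Ex (Ra cc (Bnd 0))#}) ExR [
      PT (add_mset (Ra cc kk) {#Neg GF#}, {#Ra cc kk#}) Axiom []]]]]"

lemma treeF_cproof: "cproof treeF"
  unfolding treeF_def GF_def
  by (intro cR) (auto simp: Neg_def consts_seq_def is_axiom_def is_atomic_def add_mset_commute)

lemma treeF_props: "iproof treeF \<and> root treeF = goal_seq GF {#} \<and> uses AllR treeF \<and> uses ExR treeF \<and> uses OrL treeF \<and> uses ImpR treeF"
  using treeF_cproof unfolding iproof_def by (simp add: treeF_def goal_seq_def)

definition "ShF S = (\<forall>F\<in>S. F = Imp GF Bot \<or> (\<exists>t. F = Or (Ra t t) (Ra t kk)) \<or> (\<exists>p ts. F = Atom p ts))"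
definition "BadF S C = (Imp GF Bot \<in> S \<and> ShF S \<and> (C = GF \<or> C = Bot
   \<or> (\<exists>x. x \<noteq> 5 \<and> C = Imp (Or (Ra (Fn x []) (Fn x [])) (Ra (Fn x []) kk)) (Ex (Ra (Fn x []) (Bnd 0))) \<and> (\<forall>v. Ra (Fn x []) v \<notin> S))
   \<or> (\<exists>x. x \<noteq> 5 \<and> C = Ex (Ra (Fn x []) (Bnd 0)) \<and> (\<forall>v. Ra (Fn x []) v \<notin> S))
   \<or> (\<exists>x v. x \<noteq> 5 \<and> C = Ra (Fn x []) v \<and> C \<notin> S)))"

lemma noF: "Der u R n S C \<Longrightarrow> u = True \<Longrightarrow> BadF S C \<Longrightarrow> False"
proof (induct rule: Der.induct)
  case (orL R u C A B S n)
  then obtain t where AB: "A = Ra t t" "B = Ra t kk" unfolding BadF_def ShF_def by (auto simp: GF_def)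
  show ?case
  proof (cases "C = A")
    case True
    then have "C \<noteq> B" using orL AB unfolding BadF_def by (auto simp: GF_def)
    then show ?thesis using orL AB unfolding BadF_def ShF_def by (auto simp: ab_def is_atomic_def GF_def)
  next
    case False
    then show ?thesis using orL AB unfolding BadF_def ShF_def by (auto simp: ab_def is_atomic_def)
  qed
next
  case (impL R u C A B S n)
  then have "A = GF" unfolding BadF_def ShF_def by (auto simp: GF_def)
  then show ?case using impL unfolding BadF_def ShF_def by auto
next
  case (impR R u n A S B)
  then show ?case unfolding BadF_def ShF_def by (auto simp: GF_def)
next
  case (allR R x S A u n)
  then have "A = Imp (Or (Ra (Bnd 0) (Bnd 0)) (Ra (Bnd 0) kk)) (Ex (Ra (Bnd 1) (Bnd 0)))" unfolding BadF_def by (auto simp: GF_def)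
  moreover have "\<forall>v. Ra (Fn x []) v \<notin> S" using allR(2) cs_mono by fastforce
  moreover have "x \<noteq> 5" using allR(2) cs_mono[of "Imp GF Bot" S] allR(7) unfolding BadF_def by (auto simp: GF_def)
  ultimately show ?case using allR unfolding BadF_def by auto
next
  case (exR R t u n S A)
  then show ?case unfolding BadF_def by (auto simp: GF_def)
qed (auto simp: BadF_def ShF_def GF_def ab_def is_atomic_def)

lemma exF: "\<not> (\<exists>q. uproof q \<and> root q = goal_seq GF {#})"
proof (rule no_uniform)
  fix n assume "Der True UNIV n (set_mset (add_mset (Neg GF) {#})) GF"
  then show False by (rule noF) (auto simp: BadF_def ShF_def Neg_def)
qed

theorem theorem10:
  shows "(\<forall>G \<Gamma> p. wff G \<and> (\<forall>A\<in>#\<Gamma>. wff A) \<and> iproof p \<and> root p = goal_seq G \<Gamma> \<and> restricted p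
            \<longrightarrow> (\<exists>q. uproof q \<and> root q = goal_seq G \<Gamma>))
       \<and> (\<forall>Y\<in>{AllL, ImpR}. \<exists>G \<Gamma> p. wff G \<and> (\<forall>A\<in>#\<Gamma>. wff A) \<and> iproof p \<and> root p = goal_seq G \<Gamma>
            \<and> uses AllR p \<and> uses OrR p \<and> uses OrL p \<and> uses Y p
            \<and> \<not> (\<exists>q. uproof q \<and> root q = goal_seq G \<Gamma>))
       \<and> (\<forall>Y\<in>{AllL, ImpR}. \<forall>Z\<in>{OrL, ExL}. \<exists>G \<Gamma> p. wff G \<and> (\<forall>A\<in>#\<Gamma>. wff A) \<and> iproof p
            \<and> root p = goal_seq G \<Gamma>
            \<and> uses AllR p \<and> uses ExR p \<and> uses Z p \<and> uses Y p
            \<and> \<not> (\<exists>q. uproof q \<and> root q = goal_seq G \<Gamma>))"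
  proof (intro conjI)
  show "\<forall>G \<Gamma> p. wff G \<and> (\<forall>A\<in>#\<Gamma>. wff A) \<and> iproof p \<and> root p = goal_seq G \<Gamma> \<and> restricted p
            \<longrightarrow> (\<exists>q. uproof q \<and> root q = goal_seq G \<Gamma>)"
    using part1 by blast
next
  have wA: "wff GA" "wff HA" "wff GB" "wff GC" "wff GD" "wff HE" "wff GF"
    by (simp_all add: wff_def GA_def HA_def GB_def GC_def GD_def HE_def GF_def)
  have A: "\<exists>G \<Gamma> p. wff G \<and> (\<forall>A\<in>#\<Gamma>. wff A) \<and> iproof p \<and> root p = goal_seq G \<Gamma>
            \<and> uses AllR p \<and> uses OrR p \<and> uses OrL p \<and> uses AllL p
            \<and> \<not> (\<exists>q. uproof q \<and> root q = goal_seq G \<Gamma>)"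
    apply (rule exI[of _ GA], rule exI[of _ "{#HA#}"], rule exI[of _ treeA])
    using treeA_props exA wA by simp
  have B: "\<exists>G \<Gamma> p. wff G \<and> (\<forall>A\<in>#\<Gamma>. wff A) \<and> iproof p \<and> root p = goal_seq G \<Gamma>
            \<and> uses AllR p \<and> uses OrR p \<and> uses OrL p \<and> uses ImpR p
            \<and> \<not> (\<exists>q. uproof q \<and> root q = goal_seq G \<Gamma>)"
    apply (rule exI[of _ GB], rule exI[of _ "{#}"], rule exI[of _ treeB])
    using treeB_props exB wA by simp
  show "\<forall>Y\<in>{AllL, ImpR}. \<exists>G \<Gamma> p. wff G \<and> (\<forall>A\<in>#\<Gamma>. wff A) \<and> iproof p \<and> root p = goal_seq G \<Gamma>
            \<and> uses AllR p \<and> uses OrR p \<and> uses OrL p \<and> uses Y p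
            \<and> \<not> (\<exists>q. uproof q \<and> root q = goal_seq G \<Gamma>)"
  proof (intro ballI)
    fix Y assume "Y \<in> {AllL, ImpR}"
    then have "Y = AllL \<or> Y = ImpR" by simp
    then show "\<exists>G \<Gamma> p. wff G \<and> (\<forall>A\<in>#\<Gamma>. wff A) \<and> iproof p \<and> root p = goal_seq G \<Gamma>
            \<and> uses AllR p \<and> uses OrR p \<and> uses OrL p \<and> uses Y p
            \<and> \<not> (\<exists>q. uproof q \<and> root q = goal_seq G \<Gamma>)"
    proof
      assume "Y = AllL" then show ?thesis using A by simp
    next
      assume "Y = ImpR" then show ?thesis using B by simp
    qed
  qed
next
  have wA: "wff GA" "wff HA" "wff GB" "wff GC" "wff GD" "wff HE" "wff GF"
    by (simp_all add: wff_def GA_def HA_def GB_def GC_def GD_def HE_def GF_def)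
  have E: "\<exists>G \<Gamma> p. wff G \<and> (\<forall>A\<in>#\<Gamma>. wff A) \<and> iproof p \<and> root p = goal_seq G \<Gamma>
            \<and> uses AllR p \<and> uses ExR p \<and> uses OrL p \<and> uses AllL p
            \<and> \<not> (\<exists>q. uproof q \<and> root q = goal_seq G \<Gamma>)"
    apply (rule exI[of _ GC], rule exI[of _ "{#HE#}"], rule exI[of _ treeE])
    using treeE_props exE wA by simp
  have C: "\<exists>G \<Gamma> p. wff G \<and> (\<forall>A\<in>#\<Gamma>. wff A) \<and> iproof p \<and> root p = goal_seq G \<Gamma>
            \<and> uses AllR p \<and> uses ExR p \<and> uses ExL p \<and> uses AllL p
            \<and> \<not> (\<exists>q. uproof q \<and> root q = goal_seq G \<Gamma>)"
    apply (rule exI[of _ GC], rule exI[of _ "{#GC#}"], rule exI[of _ treeC])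
    using treeC_props exC wA by simp
  have F: "\<exists>G \<Gamma> p. wff G \<and> (\<forall>A\<in>#\<Gamma>. wff A) \<and> iproof p \<and> root p = goal_seq G \<Gamma>
            \<and> uses AllR p \<and> uses ExR p \<and> uses OrL p \<and> uses ImpR p
            \<and> \<not> (\<exists>q. uproof q \<and> root q = goal_seq G \<Gamma>)"
    apply (rule exI[of _ GF], rule exI[of _ "{#}"], rule exI[of _ treeF])
    using treeF_props exF wA by simp
  have D: "\<exists>G \<Gamma> p. wff G \<and> (\<forall>A\<in>#\<Gamma>. wff A) \<and> iproof p \<and> root p = goal_seq G \<Gamma>
            \<and> uses AllR p \<and> uses ExR p \<and> uses ExL p \<and> uses ImpR p
            \<and> \<not> (\<exists>q. uproof q \<and> root q = goal_seq G \<Gamma>)"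
    apply (rule exI[of _ GD], rule exI[of _ "{#}"], rule exI[of _ treeD])
    using treeD_props exD wA by simp
  show "\<forall>Y\<in>{AllL, ImpR}. \<forall>Z\<in>{OrL, ExL}. \<exists>G \<Gamma> p. wff G \<and> (\<forall>A\<in>#\<Gamma>. wff A) \<and> iproof p
            \<and> root p = goal_seq G \<Gamma>
            \<and> uses AllR p \<and> uses ExR p \<and> uses Z p \<and> uses Y p
            \<and> \<not> (\<exists>q. uproof q \<and> root q = goal_seq G \<Gamma>)"
  proof (intro ballI)
    fix Y Z assume "Y \<in> {AllL, ImpR}" "Z \<in> {OrL, ExL}"
    then have "(Y = AllL \<or> Y = ImpR) \<and> (Z = OrL \<or> Z = ExL)" by simp
    then show "\<exists>G \<Gamma> p. wff G \<and> (\<forall>A\<in>#\<Gamma>. wff A) \<and> iproof p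
            \<and> root p = goal_seq G \<Gamma>
            \<and> uses AllR p \<and> uses ExR p \<and> uses Z p \<and> uses Y p
            \<and> \<not> (\<exists>q. uproof q \<and> root q = goal_seq G \<Gamma>)"
      using E C F D by (elim conjE disjE) simp_all
  qed
qed

end
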